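(* The set of binary representations (without leading zeros) of the record-setters of the Stern sequence $a$ is a context-free language over the alphabet $\{0,1\}$.
   Context: Stern's sequence $(a(n))_{n\ge0}$: $a(0)=0$, $a(1)=1$, $a(2n)=a(n)$, $a(2n+1)=a(n)+a(n+1)$. A record-setter of $a$ is an index $v\ge1$ with $a(i)<a(v)$ for all $i<v$. *)

theory Defs
  imports Main
begin

function stern :: "nat \<Rightarrow> nat" where
  "stern n = (if n < 2 then n
              else if even n then stern (n div 2)
              else stern (n div 2) + stern (n div 2 + 1))"
  by auto
termination by (relation "measure id") (auto elim!: oddE)

declare stern.simps [simp del]

lemma stern_0: "stern 0 = 0" by (simp add: stern.simps)
lemma stern_1: "stern 1 = 1" by (simp add: stern.simps)
lemma stern_even: "stern (2 * n) = stern n"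
  by (cases "n = 0") (simp_all add: stern.simps)
lemma stern_odd: "stern (2 * n + 1) = stern n + stern (n + 1)"
  by (cases "n = 0") (simp_all add: stern.simps stern_0 stern_1)

definition record_setter :: "nat \<Rightarrow> bool" where
  "record_setter v \<longleftrightarrow> v \<ge> 1 \<and> (\<forall>i<v. stern i < stern v)"

text \<open>Most significant bit first; False = 0, True = 1; no leading zeros
  (bin_rep 0 = [], and for n \<ge> 1 the first bit is True).\<close>
fun bin_rep :: "nat \<Rightarrow> bool list" where
  "bin_rep n = (if n = 0 then [] else bin_rep (n div 2) @ [odd n])"

declare bin_rep.simps [simp del]

text \<open>A production is a pair of a nonterminal and a right-hand side, a word over
  nonterminals (Inl) and terminals (Inr).\<close>
type_synonym ('n, 't) prod = "'n \<times> ('n + 't) list"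

definition cfg_step :: "('n, 't) prod set \<Rightarrow> ('n + 't) list \<Rightarrow> ('n + 't) list \<Rightarrow> bool" where
  "cfg_step P u v \<longleftrightarrow>
     (\<exists>l A r \<alpha>. u = l @ [Inl A] @ r \<and> (A, \<alpha>) \<in> P \<and> v = l @ \<alpha> @ r)"

definition cfg_lang :: "('n, 't) prod set \<Rightarrow> 'n \<Rightarrow> 't list set" where
  "cfg_lang P S = {w. (cfg_step P)\<^sup>*\<^sup>* [Inl S] (map Inr w)}"

text \<open>A language is context-free if it is generated by some grammar with finitely
  many productions; nonterminals are drawn from nat (any finite nonterminal
  alphabet can be encoded injectively into nat).\<close>
definition context_free :: "'t list set \<Rightarrow> bool" where
  "context_free L \<longleftrightarrow>
     (\<exists>(P :: (nat, 't) prod set) S. finite P \<and> cfg_lang P S = L)"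

end

theory Submission
  imports Defs
begin


fun F :: "nat \<Rightarrow> nat" where
  "F 0 = 0" | "F (Suc 0) = 1" | "F (Suc (Suc n)) = F (Suc n) + F n"

definition stepb :: "bool \<Rightarrow> nat \<times> nat \<Rightarrow> nat \<times> nat" where
  "stepb b st = (if b then (fst st + snd st, snd st) else (fst st, fst st + snd st))"

definition run :: "bool list \<Rightarrow> nat \<times> nat \<Rightarrow> nat \<times> nat" where
  "run w st = foldl (\<lambda>s b. stepb b s) st w"

lemma run_Nil[simp]: "run [] st = st" by (simp add: run_def)
lemma run_Cons[simp]: "run (b#w) st = run w (stepb b st)" by (simp add: run_def)
lemma run_append[simp]: "run (p@q) st = run q (run p st)" by (simp add: run_def)

definition num :: "bool list \<Rightarrow> nat" where
  "num w = foldl (\<lambda>a b. 2*a + (if b then 1 else 0)) 0 w"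

lemma num_snoc[simp]: "num (w@[b]) = 2 * num w + (if b then 1 else 0)" by (simp add: num_def)
lemma num_Nil[simp]: "num [] = 0" by (simp add: num_def)

lemma num_append: "num (p@q) = num p * 2^length q + num q"
proof (induction q rule: rev_induct)
  case Nil thus ?case by simp
next
  case (snoc x xs)
  have "num (p @ xs @ [x]) = num ((p @ xs) @ [x])" by simp
  also have "\<dots> = 2 * num (p@xs) + (if x then 1 else 0)" by (rule num_snoc)
  finally show ?case using snoc by (simp add: algebra_simps)
qed

lemma num_single: "num [b] = (if b then 1 else 0)" by (simp add: num_def)

lemma num_Cons: "num (b#w) = (if b then 2^length w else 0) + num w"
  using num_append[of "[b]" w] by (simp add: num_single)

lemma num_lt: "num w < 2^length w"
  by (induction w rule: rev_induct) auto

lemma stern_run: "stern (num w) = fst (run w (0,1)) \<and> stern (Suc (num w)) = snd (run w (0,1))"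
proof (induction w rule: rev_induct)
  case Nil thus ?case using stern_0 stern_1 by simp
next
  case (snoc b w)
  then show ?case
    using stern_even[of "num w"] stern_odd[of "num w"] stern_even[of "Suc (num w)"]
    by (auto simp: stepb_def)
qed

lemma stern_num: "stern (num w) = fst (run w (0,1))" using stern_run by blast

lemma bin_rep_num: "bin_rep (num (True#w)) = True#w"
proof (induction w rule: rev_induct)
  case Nil thus ?case by (simp add: num_def bin_rep.simps)
next
  case (snoc b w)
  have "num (True # w @ [b]) = 2 * num (True#w) + (if b then 1 else 0)"
    using num_snoc[of "True#w" b] by simp
  moreover have "num (True#w) > 0" by (simp add: num_Cons)
  ultimately show ?case using snoc
    by (subst bin_rep.simps) auto
qed

lemma num_bin_rep: "num (bin_rep v) = v"
proof (induction v rule: bin_rep.induct)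
  case (1 n) thus ?case by (subst bin_rep.simps) auto
qed

lemma bin_rep_True: "v \<ge> 1 \<Longrightarrow> \<exists>w. bin_rep v = True # w"
proof (induction v rule: bin_rep.induct)
  case (1 n)
  show ?case
  proof (cases "n = 1")
    case True thus ?thesis by (simp add: bin_rep.simps)
  next
    case False
    with 1 have "n div 2 \<ge> 1" by auto
    with 1 obtain w where "bin_rep (n div 2) = True # w" using False by auto
    thus ?thesis using 1 by (subst bin_rep.simps) auto
  qed
qed

lemma exists_pad: "i < 2^n \<Longrightarrow> \<exists>w. length w = n \<and> num w = i"
proof (induction n arbitrary: i)
  case 0 thus ?case by auto
next
  case (Suc n)
  have "i div 2 < 2^n" using Suc.prems by auto
  then obtain w where "length w = n" "num w = i div 2" using Suc.IH by blast
  thus ?case by (intro exI[of _ "w @ [odd i]"]) auto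
qed

lemma lex_split:
  "length w' = length w \<Longrightarrow> num w' < num w \<Longrightarrow>
   \<exists>q r t. w = q @ True # r \<and> w' = q @ False # t \<and> length r = length t"
proof (induction w arbitrary: w')
  case Nil thus ?case by simp
next
  case (Cons b w)
  then obtain b' u where w': "w' = b' # u" and lu: "length u = length w" by (cases w') auto
  show ?case
  proof (cases "b = b'")
    case True
    with Cons w' have "num u < num w" by (auto simp: num_Cons)
    with Cons.IH lu obtain q r t where "w = q @ True # r" "u = q @ False # t" "length r = length t" by blast
    thus ?thesis using True w' by (intro exI[of _ "b#q"] exI[of _ r] exI[of _ t]) auto
  next
    case False
    have "num u < 2^length w" using num_lt[of u] lu by simp
    moreover have "num w < 2^length w" using num_lt[of w] by simp
    ultimately have bb: "b = True \<and> b' = False" using False Cons w' lu by (auto simp: num_Cons split: if_splits)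
    show ?thesis using w' lu bb
      by (intro exI[of _ "[]"] exI[of _ w] exI[of _ u]) auto
  qed
qed

lemma lex_lt: "length r = length t \<Longrightarrow> num (q @ False # t) < num (q @ True # r)"
proof -
  assume "length r = length t"
  moreover have "num t < 2^length t" by (rule num_lt)
  ultimately show ?thesis by (auto simp: num_append num_Cons)
qed

lemma F_pos: "n \<ge> 1 \<Longrightarrow> F n \<ge> 1"
proof (induction n rule: F.induct)
  case (3 n) thus ?case by (cases n) auto
qed auto

lemma F_Suc_mono: "F n \<le> F (Suc n)"
  by (induction n rule: F.induct) auto

lemma F_mono: "m \<le> n \<Longrightarrow> F m \<le> F n"
  by (induction n) (auto simp: le_Suc_eq intro: le_trans[OF _ F_Suc_mono])

lemma F_add: "F (n + Suc m) = F (Suc m) * F (Suc n) + F m * F n"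
proof (induction m rule: F.induct)
  case 1 thus ?case by simp
next
  case 2 thus ?case by simp
next
  case (3 k)
  have "F (n + Suc (Suc (Suc k))) = F (n + Suc (Suc k)) + F (n + Suc k)"
    by (metis F.simps(3) add_Suc_right)
  also have "\<dots> = F (Suc (Suc (Suc k))) * F (Suc n) + F (Suc (Suc k)) * F n"
    using 3 by (simp add: algebra_simps)
  finally show ?case .
qed

definition H :: "nat \<Rightarrow> nat \<times> nat \<Rightarrow> nat" where
  "H m st = (if m = 0 then fst st else F m * min (fst st) (snd st) + F (Suc m) * max (fst st) (snd st))"

lemma H_0[simp]: "H 0 st = fst st" by (simp add: H_def)

lemma H_Suc: "H (Suc m) st = max (H m (stepb False st)) (H m (stepb True st))"
proof (cases st)
  case (Pair x y)
  show ?thesis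
  proof (cases m)
    case 0 thus ?thesis using Pair by (simp add: H_def stepb_def)
  next
    case (Suc k)
    have "H (Suc m) (x,y) = F (Suc m) * (min x y + max x y) + F m * max x y"
      using Suc by (simp add: H_def algebra_simps)
    moreover have "H m (stepb False (x,y)) = F m * x + F (Suc m) * (x+y)"
      using Suc by (simp add: H_def stepb_def)
    moreover have "H m (stepb True (x,y)) = F m * y + F (Suc m) * (x+y)"
      using Suc by (simp add: H_def stepb_def)
    moreover have "min x y + max x y = x + y" by simp
    ultimately show ?thesis using Pair by (simp add: max_def)
  qed
qed

lemma run_le_H: "fst (run t st) \<le> H (length t) st"
proof (induction t arbitrary: st)
  case Nil thus ?case by simp
next
  case (Cons b t)
  have "fst (run t (stepb b st)) \<le> H (length t) (stepb b st)" by (rule Cons.IH)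
  also have "\<dots> \<le> H (Suc (length t)) st" by (cases b) (auto simp: H_Suc)
  finally show ?case by simp
qed

lemma H_attained: "\<exists>t. length t = m \<and> fst (run t st) = H m st"
proof (induction m arbitrary: st)
  case 0 thus ?case by simp
next
  case (Suc m)
  show ?case
  proof (cases "H m (stepb False st) \<le> H m (stepb True st)")
    case True
    obtain t where "length t = m" "fst (run t (stepb True st)) = H m (stepb True st)" using Suc by blast
    thus ?thesis using True by (intro exI[of _ "True#t"]) (auto simp: H_Suc)
  next
    case False
    obtain t where "length t = m" "fst (run t (stepb False st)) = H m (stepb False st)" using Suc by blast
    thus ?thesis using False by (intro exI[of _ "False#t"]) (auto simp: H_Suc)
  qed
qed

lemma record_iff:
  assumes v: "v \<ge> 1"
  shows "record_setter v \<longleftrightarrow>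
    (\<forall>q r. bin_rep v = q @ True # r \<longrightarrow> H (length r) (run (q @ [False]) (0,1)) < stern v)"
proof -
  define w where "w = bin_rep v"
  have nw: "num w = v" by (simp add: w_def num_bin_rep)
  have sv: "stern v = fst (run w (0,1))" using stern_num[of w] nw by simp
  show ?thesis
  proof
    assume rs: "record_setter v"
    show "\<forall>q r. bin_rep v = q @ True # r \<longrightarrow> H (length r) (run (q @ [False]) (0,1)) < stern v"
    proof (intro allI impI)
      fix q r assume qr: "bin_rep v = q @ True # r"
      obtain t where t: "length t = length r" "fst (run t (run (q@[False]) (0,1))) = H (length r) (run (q @ [False]) (0,1))"
        using H_attained by blast
      have "num (q @ False # t) < num (q @ True # r)" using lex_lt t(1) by simp
      hence lt: "num (q @ False # t) < v" using qr nw w_def by simp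
      have "stern (num (q @ False # t)) = H (length r) (run (q @ [False]) (0,1))"
        using stern_num[of "q @ False # t"] t(2) by simp
      thus "H (length r) (run (q @ [False]) (0,1)) < stern v"
        using rs lt unfolding record_setter_def by auto
    qed
  next
    assume H: "\<forall>q r. bin_rep v = q @ True # r \<longrightarrow> H (length r) (run (q @ [False]) (0,1)) < stern v"
    show "record_setter v" unfolding record_setter_def
    proof (intro conjI allI impI)
      show "1 \<le> v" by (rule v)
      fix i assume iv: "i < v"
      have "i < 2^length w" using iv nw num_lt[of w] by simp
      then obtain w' where w': "length w' = length w" "num w' = i" using exists_pad by blast
      then obtain q r t where qrt: "w = q @ True # r" "w' = q @ False # t" "length r = length t"
        using lex_split[of w' w] iv nw by auto
      have "stern i = fst (run t (run (q@[False]) (0,1)))" using stern_num[of w'] w' qrt by simp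
      also have "\<dots> \<le> H (length r) (run (q@[False]) (0,1))" using run_le_H qrt(3) by metis
      also have "\<dots> < stern v" using H qrt(1) unfolding w_def by blast
      finally show "stern i < stern v" .
    qed
  qed
qed

definition dr :: "bool \<Rightarrow> nat \<times> nat \<Rightarrow> nat \<Rightarrow> nat" where
  "dr b st M = H M st - H (M - 1) (stepb b st)"

lemma H_dr: "H (Suc m) st = H m (stepb b st) + dr b st (Suc m)"
  unfolding dr_def by (cases b) (auto simp: H_Suc)

lemma dr_False2: "dr False (x,y) (Suc (Suc k)) = F (Suc k) * (y - x)"
proof -
  have "H (Suc (Suc k)) (x,y) = H (Suc k) (x, x+y) + F (Suc k) * (y - x)"
  proof (cases "x \<le> y")
    case True
    then obtain d where d: "y = x + d" using le_Suc_ex by blast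
    show ?thesis using True by (simp add: H_def d min_def max_def algebra_simps)
  next
    case False
    thus ?thesis by (simp add: H_def min_def max_def algebra_simps)
  qed
  thus ?thesis unfolding dr_def by (simp add: stepb_def)
qed

lemma dr_True2: "dr True (x,y) (Suc (Suc k)) = F (Suc k) * (x - y)"
proof -
  have "H (Suc (Suc k)) (x,y) = H (Suc k) (x+y, y) + F (Suc k) * (x - y)"
  proof (cases "y \<le> x")
    case True
    then obtain d where d: "x = y + d" using le_Suc_ex by blast
    show ?thesis using True by (simp add: H_def d min_def max_def algebra_simps)
  next
    case False
    thus ?thesis by (simp add: H_def min_def max_def algebra_simps)
  qed
  thus ?thesis unfolding dr_def by (simp add: stepb_def)
qed

lemma dr_False1: "dr False (x,y) (Suc 0) = y"
  by (simp add: dr_def H_def stepb_def)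

lemma dr_True1: "dr True (x,y) (Suc 0) = 0"
  by (simp add: dr_def H_def stepb_def)

fun tot :: "bool list \<Rightarrow> nat \<times> nat \<Rightarrow> nat" where
  "tot [] st = 0"
| "tot (b#t) st = dr b st (Suc (length t)) + tot t (stepb b st)"

lemma H_tot: "H (length t) st = fst (run t st) + tot t st"
proof (induction t arbitrary: st)
  case Nil thus ?case by simp
next
  case (Cons b t)
  show ?case using Cons.IH[of "stepb b st"] H_dr[of "length t" st b] by simp
qed

lemma tot_append_ge: "tot t (run p st) \<le> tot (p @ t) st"
proof (induction p arbitrary: st)
  case Nil thus ?case by simp
next
  case (Cons b p)
  have "tot t (run p (stepb b st)) \<le> tot (p @ t) (stepb b st)" by (rule Cons.IH)
  thus ?case by simp
qed

definition crit :: "bool list \<Rightarrow> bool" where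
  "crit w \<longleftrightarrow> (\<forall>q r. w = q @ True # r \<longrightarrow>
      tot (True#r) (run q (0,1)) < dr False (run q (0,1)) (Suc (length r)))"

lemma record_crit:
  assumes v: "v \<ge> 1" shows "record_setter v \<longleftrightarrow> crit (bin_rep v)"
proof -
  have key: "H (length r) (run (q @ [False]) (0,1)) < stern v \<longleftrightarrow>
      tot (True#r) (run q (0,1)) < dr False (run q (0,1)) (Suc (length r))"
    if qr: "bin_rep v = q @ True # r" for q r
  proof -
    define st where "st = run q (0,1)"
    have sv: "stern v = fst (run (True#r) st)"
      using stern_num[of "bin_rep v"] num_bin_rep[of v] qr st_def by simp
    have e1: "H (length (True#r)) st = fst (run (True#r) st) + tot (True#r) st" by (rule H_tot)
    have e2: "H (Suc (length r)) st = H (length r) (stepb False st) + dr False st (Suc (length r))"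
      by (rule H_dr)
    have e3: "run (q @ [False]) (0,1) = stepb False st" by (simp add: st_def)
    have eq: "fst (run (True#r) st) + tot (True#r) st = H (length r) (stepb False st) + dr False st (Suc (length r))"
      using e1 e2 by simp
    show ?thesis unfolding sv e3 st_def[symmetric] using eq by linarith
  qed
  show ?thesis using record_iff[OF v] key unfolding crit_def by blast
qed

lemma record_odd: "record_setter v \<Longrightarrow> odd v"
proof (rule ccontr)
  assume rs: "record_setter v" and ev: "\<not> odd v"
  then obtain k where k: "v = 2 * k" by (auto elim: evenE)
  with rs have "k \<ge> 1" unfolding record_setter_def by auto
  hence "k < v" using k by simp
  hence "stern k < stern v" using rs unfolding record_setter_def by auto
  thus False using k stern_even[of k] by simp
qed

lemma crit_no11: "crit (q @ True # True # r) \<Longrightarrow> r = []"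
proof (rule ccontr)
  assume c: "crit (q @ True # True # r)" and r: "r \<noteq> []"
  define st where "st = run q (0,1)"
  obtain k where k: "length r = Suc k" using r by (cases r) auto
  have "tot (True#r) (run (q@[True]) (0,1)) < dr False (run (q@[True]) (0,1)) (Suc (length r))"
    using c unfolding crit_def by (metis append.assoc append_Cons append_Nil)
  moreover have "dr False (run (q@[True]) (0,1)) (Suc (length r)) = 0"
    using k by (simp add: stepb_def dr_False2 split: prod.splits)
  ultimately show False by simp
qed

definition tens :: "nat \<Rightarrow> bool list" where
  "tens k = concat (replicate k [True, False])"

lemma tens_0[simp]: "tens 0 = []" by (simp add: tens_def)
lemma tens_Suc[simp]: "tens (Suc k) = True # False # tens k" by (simp add: tens_def)
lemma tens_add: "tens (a + b) = tens a @ tens b" by (simp add: tens_def replicate_add)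
lemma length_tens[simp]: "length (tens k) = 2 * k" by (induction k) auto

definition TT :: "nat \<times> nat \<Rightarrow> nat \<times> nat" where
  "TT st = (fst st + snd st, fst st + 2 * snd st)"

fun Tp :: "nat \<Rightarrow> nat \<times> nat \<Rightarrow> nat \<times> nat" where
  "Tp 0 st = st"
| "Tp (Suc k) st = Tp k (TT st)"

lemma run_tens: "run (tens k) st = Tp k st"
  by (induction k arbitrary: st) (auto simp: stepb_def TT_def mult_2 add.assoc)

lemma Tp_snd: "snd (Tp k (x,y)) = F (2*k) * x + F (Suc (2*k)) * y"
proof (induction k arbitrary: x y)
  case 0 thus ?case by simp
next
  case (Suc k)
  have "snd (Tp (Suc k) (x,y)) = F (2*k) * (x+y) + F (Suc (2*k)) * (x + 2*y)"
    using Suc by (simp add: TT_def)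
  also have "\<dots> = F (2 * Suc k) * x + F (Suc (2 * Suc k)) * y"
    by (simp add: algebra_simps)
  finally show ?case .
qed

lemma Tp_fst: "fst (Tp k (x,y)) + F (2*k) * x = F (Suc (2*k)) * x + F (2*k) * y"
proof (induction k arbitrary: x y)
  case 0 thus ?case by simp
next
  case (Suc k)
  have "fst (Tp (Suc k) (x,y)) + F (2*k) * (x+y) = F (Suc (2*k)) * (x+y) + F (2*k) * (x + 2*y)"
    using Suc[of "x+y" "x+2*y"] by (simp add: TT_def)
  thus ?case by (simp add: algebra_simps)
qed

lemma Tp_le: "fst (Tp k st) \<le> snd (Tp k st)" if "fst st \<le> snd st"
  using that by (induction k arbitrary: st) (auto simp: TT_def)

lemma Tp_lt: "fst (Tp k st) < snd (Tp k st)" if "fst st < snd st"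
  using that by (induction k arbitrary: st) (auto simp: TT_def)

lemma Tp_trunk: "Tp a (0,1) = (F (2*a), F (Suc (2*a)))"
  using Tp_fst[of a 0 1] Tp_snd[of a 0 1] by (cases "Tp a (0,1)") simp

lemma Tp_mono: "fst st \<le> fst st' \<Longrightarrow> snd st \<le> snd st' \<Longrightarrow>
    fst (Tp k st) \<le> fst (Tp k st') \<and> snd (Tp k st) \<le> snd (Tp k st')"
  by (induction k arbitrary: st st') (auto simp: TT_def)

lemma tot_TF: "fst st \<le> snd st \<Longrightarrow> rest \<noteq> [] \<Longrightarrow> tot (True # False # rest) st = tot rest (TT st)"
proof -
  assume le: "fst st \<le> snd st" and r: "rest \<noteq> []"
  obtain k where k: "length rest = Suc k" using r by (cases rest) auto
  obtain x y where st: "st = (x,y)" by fastforce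
  have "dr True (x,y) (Suc (length (False#rest))) = 0" using le st k by (simp add: dr_True2)
  moreover have "dr False (x+y,y) (Suc (length rest)) = 0" using k by (simp add: dr_False2)
  moreover have "stepb False (stepb True (x,y)) = TT (x,y)" by (simp add: stepb_def TT_def)
  ultimately show ?thesis using st by (simp add: stepb_def)
qed

lemma tot_tens: "fst st \<le> snd st \<Longrightarrow> rest \<noteq> [] \<Longrightarrow> tot (tens k @ rest) st = tot rest (Tp k st)"
proof (induction k arbitrary: st)
  case 0 thus ?case by simp
next
  case (Suc k)
  have "tot (tens (Suc k) @ rest) st = tot (tens k @ rest) (TT st)"
    using tot_TF[OF Suc.prems(1), of "tens k @ rest"] Suc.prems(2) by simp
  also have "\<dots> = tot rest (Tp k (TT st))"
    using Suc.IH[of "TT st"] Suc.prems by (simp add: TT_def)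
  finally show ?case by simp
qed

lemma tot_F: "rest \<noteq> [] \<Longrightarrow> tot (False # rest) st = F (length rest) * (snd st - fst st) + tot rest (stepb False st)"
proof -
  assume r: "rest \<noteq> []"
  obtain k where k: "length rest = Suc k" using r by (cases rest) auto
  obtain x y where st: "st = (x,y)" by fastforce
  show ?thesis using k st by (simp add: dr_False2)
qed

lemma tot_T1: "tot [True] st = 0"
proof -
  obtain x y where "st = (x,y)" by fastforce
  thus ?thesis by (simp add: dr_True1)
qed

lemma tot_TT: "fst st \<le> snd st \<Longrightarrow> tot [True, True] st = 0"
proof -
  assume a: "fst st \<le> snd st"
  obtain x y where st: "st = (x,y)" by fastforce
  have "tot [True, True] (x,y) = dr True (x,y) (Suc (Suc 0)) + dr True (x+y,y) (Suc 0)"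
    by (simp add: stepb_def)
  thus ?thesis using a st by (simp add: dr_True1 dr_True2)
qed

definition ends :: "bool list \<Rightarrow> bool" where
  "ends E \<longleftrightarrow> E = [True] \<or> E = [True, True]"

lemma tot_tail: "fst st \<le> snd st \<Longrightarrow> ends E \<Longrightarrow> tot (tens k @ E) st = 0"
proof -
  assume a: "fst st \<le> snd st" "ends E"
  have "E \<noteq> []" using a(2) unfolding ends_def by auto
  hence "tot (tens k @ E) st = tot E (Tp k st)" using tot_tens a(1) by blast
  moreover have "tot E (Tp k st) = 0" using a Tp_le[of st k] tot_T1[of "Tp k st"] tot_TT[of "Tp k st"]
    unfolding ends_def by (elim disjE) (simp_all del: tot.simps)
  ultimately show ?thesis by simp
qed

definition critP :: "bool list \<Rightarrow> nat \<times> nat \<Rightarrow> bool" where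
  "critP w st0 \<longleftrightarrow> (\<forall>q r. w = q @ True # r \<longrightarrow>
      tot (True#r) (run q st0) < dr False (run q st0) (Suc (length r)))"

lemma crit_critP: "crit w = critP w (0,1)" by (simp add: crit_def critP_def)

lemma split_True: "q @ True # r = x @ y \<Longrightarrow>
   (\<exists>r'. x = q @ True # r' \<and> r = r' @ y) \<or> (\<exists>q'. q = x @ q' \<and> y = q' @ True # r)"
  by (auto simp: append_eq_append_conv2 Cons_eq_append_conv)

lemma critP_append:
  assumes "\<And>q r'. x = q @ True # r' \<Longrightarrow>
      tot (True # r' @ y) (run q st0) < dr False (run q st0) (Suc (length r' + length y))"
    and "critP y (run x st0)"
  shows "critP (x @ y) st0"
  unfolding critP_def
proof (intro allI impI)
  fix q r assume qr: "x @ y = q @ True # r"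
  from split_True[OF qr[symmetric]] show "tot (True#r) (run q st0) < dr False (run q st0) (Suc (length r))"
  proof
    assume "\<exists>r'. x = q @ True # r' \<and> r = r' @ y"
    then obtain r' where "x = q @ True # r'" "r = r' @ y" by blast
    thus ?thesis using assms(1) by simp
  next
    assume "\<exists>q'. q = x @ q' \<and> y = q' @ True # r"
    then obtain q' where "q = x @ q'" "y = q' @ True # r" by blast
    thus ?thesis using assms(2) unfolding critP_def by simp
  qed
qed

lemma critP_False: "critP y (stepb False st0) \<Longrightarrow> critP (False # y) st0"
proof -
  assume "critP y (stepb False st0)"
  hence "critP ([False] @ y) st0" by (intro critP_append) (auto simp: Cons_eq_append_conv)
  thus ?thesis by simp
qed

lemma tens_pos: "tens k = q @ True # r \<Longrightarrow> \<exists>i<k. q = tens i \<and> r = False # tens (k - Suc i)"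
proof (induction k arbitrary: q)
  case 0 thus ?case by simp
next
  case (Suc k)
  show ?case
  proof (cases q)
    case Nil thus ?thesis using Suc.prems by auto
  next
    case (Cons c q1)
    with Suc.prems obtain q2 where q1: "q1 = False # q2" and "tens k = q2 @ True # r"
      by (cases q1) auto
    with Suc.IH obtain i where "i < k" "q2 = tens i" "r = False # tens (k - Suc i)" by blast
    thus ?thesis using Cons q1 Suc.prems by (intro exI[of _ "Suc i"]) auto
  qed
qed

lemma dr_pos: "fst st < snd st \<Longrightarrow> M \<ge> 1 \<Longrightarrow> 0 < dr False st M"
proof -
  assume a: "fst st < snd st" "M \<ge> 1"
  obtain x y where st: "st = (x,y)" by fastforce
  show ?thesis
  proof (cases M)
    case 0 thus ?thesis using a by simp
  next
    case (Suc k)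
    show ?thesis
    proof (cases k)
      case 0 thus ?thesis using Suc st a by (simp add: dr_False1)
    next
      case (Suc j)
      thus ?thesis using \<open>M = Suc k\<close> st a F_pos[of "Suc j"] by (simp add: dr_False2)
    qed
  qed
qed

lemma critP_E: "fst st < snd st \<Longrightarrow> ends E \<Longrightarrow> critP E st"
proof -
  assume a: "fst st < snd st" "ends E"
  obtain x y where st: "st = (x,y)" by fastforce
  have c1: "critP [True] (x,y)" if "x < y" for x y
    using that unfolding critP_def by (auto simp: Cons_eq_append_conv dr_True1 dr_False1)
  have c2: "critP [True,True] (x,y)" if "x < y" for x y
  proof -
    have "tot [True, True] (x,y) = 0" using tot_TT[of "(x,y)"] that by simp
    moreover have "dr False (x,y) (Suc (Suc 0)) > 0" using that by (simp add: dr_False2)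
    moreover have "tot [True] (x+y,y) = 0" by (rule tot_T1)
    moreover have "dr False (x+y,y) (Suc 0) > 0" using that by (simp add: dr_False1)
    ultimately show ?thesis unfolding critP_def
      by (auto simp: Cons_eq_append_conv stepb_def simp del: tot.simps)
  qed
  show ?thesis using a st c1 c2 unfolding ends_def by auto
qed

lemma critP_tail: "fst st < snd st \<Longrightarrow> ends E \<Longrightarrow> critP (tens k @ E) st"
proof (rule critP_append)
  assume a: "fst st < snd st" "ends E"
  show "critP E (run (tens k) st)" using a critP_E Tp_lt by (simp add: run_tens)
  fix q r' assume qr: "tens k = q @ True # r'"
  then obtain i where i: "i < k" "q = tens i" "r' = False # tens (k - Suc i)" using tens_pos by blast
  have "k - i = Suc (k - Suc i)" using i by arith
  hence e: "True # r' @ E = tens (k - i) @ E" using i by simp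
  have "tot (True # r' @ E) (run q st) = tot (tens (k - i) @ E) (Tp i st)"
    unfolding e using i by (simp add: run_tens del: tot.simps)
  hence "tot (True # r' @ E) (run q st) = 0" using i a Tp_lt[of st i] tot_tail[of "Tp i st" E "k-i"]
    by simp
  moreover have "0 < dr False (run q st) (Suc (length r' + length E))"
    using i a Tp_lt[of st i] by (intro dr_pos) (auto simp: run_tens)
  ultimately show "tot (True # r' @ E) (run q st) < dr False (run q st) (Suc (length r' + length E))" by simp
qed


lemma vajda: "q \<le> p \<Longrightarrow> int (F (q+k)) * int (F p) - int (F q) * int (F (p+k)) = (-1)^q * int (F k) * int (F (p-q))"
proof (induction q arbitrary: p rule: F.induct)
  case 1 thus ?case by simp
next
  case 2
  then obtain p' where p: "p = Suc p'" by (cases p) auto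
  have "F (p' + Suc k) = F (Suc k) * F (Suc p') + F k * F p'" by (rule F_add)
  thus ?case using p by (simp add: algebra_simps)
next
  case (3 j)
  have p: "Suc (Suc j) \<le> p" by fact
  have ih1: "int (F (Suc j+k)) * int (F p) - int (F (Suc j)) * int (F (p+k)) = (-1)^(Suc j) * int (F k) * int (F (p - Suc j))"
    using 3 p by simp
  have ih0: "int (F (j+k)) * int (F p) - int (F j) * int (F (p+k)) = (-1)^j * int (F k) * int (F (p - j))"
    using 3 p by simp
  have f1: "F (Suc (Suc j) + k) = F (Suc j + k) + F (j + k)" by simp
  have f2: "F (p - j) = F (p - Suc j) + F (p - Suc (Suc j))"
  proof -
    have "p - j = Suc (Suc (p - Suc (Suc j)))" using p by arith
    moreover have "p - Suc j = Suc (p - Suc (Suc j))" using p by arith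
    ultimately show ?thesis by simp
  qed
  show ?case using ih1 ih0 f1 f2 by (simp add: algebra_simps)
qed

lemma vajda_even: "q \<le> p \<Longrightarrow> even q \<Longrightarrow> F (q+k) * F p = F q * F (p+k) + F k * F (p-q)"
  using vajda[of q p k] by (simp add: of_nat_mult[symmetric] del: of_nat_mult)

lemma vajda_odd: "q \<le> p \<Longrightarrow> odd q \<Longrightarrow> F q * F (p+k) = F (q+k) * F p + F k * F (p-q)"
  using vajda[of q p k] by (simp add: of_nat_mult[symmetric] del: of_nat_mult)

definition dt :: "nat \<Rightarrow> nat \<Rightarrow> nat" where
  "dt n i = F (n - 2*i - 1) * (F (2*i+1) - F (2*i))"

lemma dt_0: "dt n 0 = F (n - 1)" by (simp add: dt_def)
lemma dt_Suc: "dt n (Suc i) = F (n - 2*i - 3) * F (2*i+1)"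
  by (simp add: dt_def numeral_3_eq_3)

lemma dt_case1:
  assumes "a = i + t" "n = 2*a + 2*i + e" "i \<ge> 1"
  shows "dt n i = dt n a + F (2*t) * F e"
proof -
  obtain i' where i: "i = Suc i'" using assms(3) by (cases i) auto
  have v: "F (2*i'+1) * F (2*i'+1+e + 2*t) = F (2*i'+1 + 2*t) * F (2*i'+1+e) + F (2*t) * F e"
    using vajda_odd[of "2*i'+1" "2*i'+1+e" "2*t"] by simp
  have "dt n i = F (2*i'+1+e + 2*t) * F (2*i'+1)" using assms i by (simp add: dt_Suc add_ac)
  moreover have "dt n a = F (2*i'+1+e) * F (2*i'+1 + 2*t)"
    using assms i by (simp add: dt_Suc add.commute[of t] add.assoc)
  ultimately show ?thesis using v by (simp add: algebra_simps add_ac)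
qed

lemma dt_case2:
  assumes "a = i + t" "n + e = 2*a + 2*i" "n \<ge> 2*a + 2" "i \<ge> 1" "odd n"
  shows "dt n i = dt n a + F (2*t) * F e"
proof -
  obtain i' where i: "i = Suc i'" using assms(4) by (cases i) auto
  obtain h where h: "n = 2*a + 2 + h" using assms(3) le_Suc_ex by blast
  have eh: "e + h + 1 = 2*i' + 1" using assms(1,2) h i by simp
  have ev: "even (h+1)" using assms(5) h by simp
  have pq: "2*i'+1 - (h+1) = e" using eh by arith
  have v: "F (h+1 + 2*t) * F (2*i'+1) = F (h+1) * F (2*i'+1 + 2*t) + F (2*t) * F e"
    using vajda_even[of "h+1" "2*i'+1" "2*t"] eh ev pq by simp
  have "dt n i = F (h+1 + 2*t) * F (2*i'+1)" using assms i h by (simp add: dt_Suc add_ac)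
  moreover have "dt n a = F (h+1) * F (2*i'+1 + 2*t)"
    using assms i h by (simp add: dt_Suc add.commute[of t] add.assoc)
  ultimately show ?thesis using v by (simp add: algebra_simps)
qed

lemma dt_case3:
  assumes "a = i + t" "n + e = 2*a + 2*i" "n \<ge> 2*a + 2" "i \<ge> 1" "even n"
  shows "dt n a = dt n i + F (2*t) * F e"
proof -
  obtain i' where i: "i = Suc i'" using assms(4) by (cases i) auto
  obtain h where h: "n = 2*a + 2 + h" using assms(3) le_Suc_ex by blast
  have eh: "e + h + 1 = 2*i' + 1" using assms(1,2) h i by simp
  have ev: "odd (h+1)" using assms(5) h by simp
  have pq: "2*i'+1 - (h+1) = e" using eh by arith
  have v: "F (h+1) * F (2*i'+1 + 2*t) = F (h+1 + 2*t) * F (2*i'+1) + F (2*t) * F e"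
    using vajda_odd[of "h+1" "2*i'+1" "2*t"] eh ev pq by simp
  have "dt n i = F (h+1 + 2*t) * F (2*i'+1)" using assms i h by (simp add: dt_Suc add_ac)
  moreover have "dt n a = F (h+1) * F (2*i'+1 + 2*t)"
    using assms i h by (simp add: dt_Suc add.commute[of t] add.assoc)
  ultimately show ?thesis using v by (simp add: algebra_simps)
qed

lemma F_prod_le: "p \<ge> 1 \<Longrightarrow> q \<ge> 1 \<Longrightarrow> F p * F q \<le> F (p + q - 1)"
proof -
  assume "p \<ge> 1" "q \<ge> 1"
  then obtain p' q' where p: "p = Suc p'" and q: "q = Suc q'" by (cases p, simp, cases q, auto)
  have "F (p' + Suc q') = F (Suc q') * F (Suc p') + F q' * F p'" by (rule F_add)
  thus ?thesis using p q by (simp add: algebra_simps)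
qed

lemma F_prod_ge: "p \<ge> 1 \<Longrightarrow> q \<ge> 1 \<Longrightarrow> F (p + q - 2) \<le> F p * F q"
proof -
  assume a: "p \<ge> 1" "q \<ge> 1"
  then obtain p' where p: "p = Suc p'" by (cases p) auto
  show ?thesis
  proof (cases "q = 1")
    case True thus ?thesis using p F_Suc_mono[of p'] by simp
  next
    case False
    then obtain q' where q: "q = Suc (Suc q')" using a by (cases q; cases "q - 1") auto
    have "F (p' + Suc q') = F (Suc q') * F (Suc p') + F q' * F p'" by (rule F_add)
    moreover have "F q' * F p' \<le> F q' * F (Suc p')" using F_Suc_mono by simp
    ultimately show ?thesis using p q by (simp add: algebra_simps)
  qed
qed

lemma Tp_add: "Tp (i + j) st = Tp j (Tp i st)"
  by (induction i arbitrary: st) auto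

lemma critP_tens_prefix:
  assumes le: "fst st \<le> snd st" and y: "y \<noteq> []"
    and pos: "\<And>i. i < k \<Longrightarrow> tot y (Tp k st) < dr False (Tp i st) (2*(k-i) + length y)"
    and rest: "critP y (Tp k st)"
  shows "critP (tens k @ y) st"
proof (rule critP_append)
  show "critP y (run (tens k) st)" using rest by (simp add: run_tens)
  fix q r' assume qr: "tens k = q @ True # r'"
  then obtain i where i: "i < k" "q = tens i" "r' = False # tens (k - Suc i)" using tens_pos by blast
  have "k - i = Suc (k - Suc i)" using i by arith
  hence e: "True # r' @ y = tens (k - i) @ y" using i by simp
  have "tot (True # r' @ y) (run q st) = tot (tens (k - i) @ y) (Tp i st)"
    unfolding e using i by (simp add: run_tens del: tot.simps)
  also have "\<dots> = tot y (Tp (k-i) (Tp i st))" using tot_tens[OF Tp_le[OF le] y] by blast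
  also have "\<dots> = tot y (Tp k st)" using i Tp_add[of i "k-i" st] by simp
  finally have t: "tot (True # r' @ y) (run q st) = tot y (Tp k st)" .
  have l: "Suc (length r' + length y) = 2*(k-i) + length y" using i by simp
  show "tot (True # r' @ y) (run q st) < dr False (run q st) (Suc (length r' + length y))"
    unfolding t l using pos[OF i(1)] i by (simp add: run_tens)
qed

lemma dt_lt_0: "1 \<le> a \<Longrightarrow> 2*a + 2 \<le> n \<Longrightarrow> dt n a < dt n 0"
proof -
  assume a: "1 \<le> a" "2*a + 2 \<le> n"
  then obtain a' where a': "a = Suc a'" by (cases a) auto
  have "dt n a = F (n - 2*a' - 3) * F (2*a' + 1)" using a' by (simp add: dt_Suc)
  also have "\<dots> \<le> F (n - 2*a' - 3 + (2*a' + 1) - 1)" using a a' by (intro F_prod_le) auto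
  also have "n - 2*a' - 3 + (2*a' + 1) - 1 = n - 3" using a a' by arith
  finally have le: "dt n a \<le> F (n - 3)" .
  obtain m where m: "n = Suc (Suc (Suc m))" using a by (cases n; cases "n - 1"; cases "n - 2") auto
  have "F (Suc m) \<ge> 1" by (rule F_pos) simp
  hence "F (n - 3) < F (n - 1)" using m by simp
  thus ?thesis using le by (simp add: dt_0)
qed

lemma dt_incl: "i < a \<Longrightarrow> 2*a + 2 \<le> n \<Longrightarrow> (2*a + 2*i < n \<or> odd n) \<Longrightarrow> dt n a < dt n i"
proof -
  assume ia: "i < a" and an: "2*a + 2 \<le> n" and c: "2*a + 2*i < n \<or> odd n"
  show ?thesis
  proof (cases "i = 0")
    case True thus ?thesis using dt_lt_0 ia an by auto
  next
    case False
    define t where "t = a - i"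
    have t: "a = i + t" "t \<ge> 1" using ia by (auto simp: t_def)
    have Ft: "F (2*t) \<ge> 1" using t by (intro F_pos) auto
    show ?thesis
    proof (cases "2*a + 2*i \<le> n")
      case True
      then obtain e where e: "n = 2*a + 2*i + e" using le_Suc_ex by blast
      have d: "dt n i = dt n a + F (2*t) * F e" using dt_case1[OF t(1) e] False by simp
      have "e \<ge> 1" using c e by (cases e) auto
      hence "F e \<ge> 1" by (rule F_pos)
      thus ?thesis using d Ft by (simp add: less_le_trans[OF _ mult_le_mono[OF Ft]] )
    next
      case False2: False
      define e where "e = 2*a + 2*i - n"
      have e: "n + e = 2*a + 2*i" using False2 by (simp add: e_def)
      have on: "odd n" using c False2 by auto
      have d: "dt n i = dt n a + F (2*t) * F e" using dt_case2[OF t(1) e an _ on] False by simp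
      have "e \<ge> 1" using e False2 by auto
      hence "F e \<ge> 1" by (rule F_pos)
      thus ?thesis using d Ft by (simp add: less_le_trans[OF _ mult_le_mono[OF Ft]] )
    qed
  qed
qed


fun L :: "nat \<Rightarrow> nat" where
  "L 0 = 2" | "L (Suc 0) = 1" | "L (Suc (Suc n)) = L (Suc n) + L n"

lemma L_F: "L (Suc n) = F n + F (Suc (Suc n))"
  by (induction n rule: F.induct) auto

lemma FL_ge: "q \<le> p \<Longrightarrow> int (F p) * int (L q) = int (F (p+q)) + (-1)^q * int (F (p-q))"
proof (induction q arbitrary: p rule: L.induct)
  case 1 thus ?case by simp
next
  case 2
  then obtain p' where p: "p = Suc p'" by (cases p) auto
  thus ?case by simp
next
  case (3 j)
  have p: "Suc (Suc j) \<le> p" by fact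
  have ih1: "int (F p) * int (L (Suc j)) = int (F (p + Suc j)) + (-1)^(Suc j) * int (F (p - Suc j))"
    using 3 p by simp
  have ih0: "int (F p) * int (L j) = int (F (p + j)) + (-1)^j * int (F (p - j))"
    using 3 p by simp
  have f1: "F (p + Suc (Suc j)) = F (p + Suc j) + F (p + j)" by simp
  have f2: "F (p - j) = F (p - Suc j) + F (p - Suc (Suc j))"
  proof -
    have "p - j = Suc (Suc (p - Suc (Suc j)))" using p by arith
    moreover have "p - Suc j = Suc (p - Suc (Suc j))" using p by arith
    ultimately show ?thesis by simp
  qed
  show ?case using ih1 ih0 f1 f2 by (simp add: algebra_simps)
qed

lemma FL_le: "p \<le> q \<Longrightarrow> int (F p) * int (L q) = int (F (p+q)) - (-1)^p * int (F (q-p))"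
proof (induction p arbitrary: q rule: F.induct)
  case 1 thus ?case by simp
next
  case 2
  then obtain q' where q: "q = Suc q'" by (cases q) auto
  thus ?case using L_F[of q'] by simp
next
  case (3 j)
  have q: "Suc (Suc j) \<le> q" by fact
  have ih1: "int (F (Suc j)) * int (L q) = int (F (Suc j + q)) - (-1)^(Suc j) * int (F (q - Suc j))"
    using 3 q by simp
  have ih0: "int (F j) * int (L q) = int (F (j + q)) - (-1)^j * int (F (q - j))"
    using 3 q by simp
  have f1: "F (Suc (Suc j) + q) = F (Suc j + q) + F (j + q)" by simp
  have f2: "F (q - j) = F (q - Suc j) + F (q - Suc (Suc j))"
  proof -
    have "q - j = Suc (Suc (q - Suc (Suc j)))" using q by arith
    moreover have "q - Suc j = Suc (q - Suc (Suc j))" using q by arith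
    ultimately show ?thesis by simp
  qed
  show ?case using ih1 ih0 f1 f2 by (simp add: algebra_simps)
qed

lemma Tp_13: "Tp i (1,3) = (L (2*i+1), L (2*i+2))"
proof (induction i)
  case 0 thus ?case by (simp add: numeral_3_eq_3)
next
  case (Suc i)
  have "Tp (Suc i) (1,3) = TT (Tp i (1,3))" using Tp_add[of i 1 "(1,3)"] by simp
  also have "\<dots> = (L (2*i+1) + L (2*i+2), L (2*i+1) + 2 * L (2*i+2))" using Suc by (simp add: TT_def)
  also have "\<dots> = (L (2 * Suc i + 1), L (2 * Suc i + 2))"
    by (simp add: eval_nat_numeral)
  finally show ?case .
qed

definition e :: "nat \<Rightarrow> nat \<Rightarrow> nat" where
  "e n i = F (n - 4 - 2*i) * L (2*i)"

lemma e_big: "4 + 4*i \<le> n \<Longrightarrow> e n i = F (n - 4) + F (n - 4 - 4*i)"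
proof -
  assume a: "4 + 4*i \<le> n"
  have "int (F (n - 4 - 2*i)) * int (L (2*i)) = int (F (n - 4 - 2*i + 2*i)) + (-1)^(2*i) * int (F (n - 4 - 2*i - 2*i))"
    using a by (intro FL_ge) auto
  moreover have "n - 4 - 2*i + 2*i = n - 4" "n - 4 - 2*i - 2*i = n - 4 - 4*i" using a by auto
  ultimately show ?thesis unfolding e_def by (simp add: of_nat_mult[symmetric] del: of_nat_mult)
qed

lemma e_small_odd: "n < 4 + 4*i \<Longrightarrow> 4 + 2*i \<le> n \<Longrightarrow> odd n \<Longrightarrow> e n i = F (n - 4) + F (4*i + 4 - n)"
proof -
  assume a: "n < 4 + 4*i" "4 + 2*i \<le> n" "odd n"
  have "int (F (n - 4 - 2*i)) * int (L (2*i)) = int (F (n - 4 - 2*i + 2*i)) - (-1)^(n - 4 - 2*i) * int (F (2*i - (n - 4 - 2*i)))"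
    using a by (intro FL_le) auto
  moreover have "n - 4 - 2*i + 2*i = n - 4" "2*i - (n - 4 - 2*i) = 4*i + 4 - n" using a by auto
  moreover have "odd (n - 4 - 2*i)" using a by auto
  ultimately show ?thesis unfolding e_def by (simp add: of_nat_mult[symmetric] del: of_nat_mult)
qed

lemma e_small_even: "n < 4 + 4*i \<Longrightarrow> 4 + 2*i \<le> n \<Longrightarrow> even n \<Longrightarrow> e n i + F (4*i + 4 - n) = F (n - 4)"
proof -
  assume a: "n < 4 + 4*i" "4 + 2*i \<le> n" "even n"
  have "int (F (n - 4 - 2*i)) * int (L (2*i)) = int (F (n - 4 - 2*i + 2*i)) - (-1)^(n - 4 - 2*i) * int (F (2*i - (n - 4 - 2*i)))"
    using a by (intro FL_le) auto
  moreover have "n - 4 - 2*i + 2*i = n - 4" "2*i - (n - 4 - 2*i) = 4*i + 4 - n" using a by auto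
  moreover have "even (n - 4 - 2*i)" using a by auto
  ultimately show ?thesis unfolding e_def by (simp add: of_nat_mult[symmetric] del: of_nat_mult)
qed

lemma F_lt2: "F m < F (m + 2)"
proof -
  have "F (Suc m) \<ge> 1" by (rule F_pos) simp
  thus ?thesis by (simp add: numeral_2_eq_2)
qed

lemma F_lt: "m + 2 \<le> n \<Longrightarrow> F m < F n"
  using F_lt2[of m] F_mono[of "m+2" n] by simp

lemma e_incl: "i < b \<Longrightarrow> 4 + 2*b \<le> n \<Longrightarrow> (even n \<or> 4*b + 3 \<le> n) \<Longrightarrow> e n b < e n i"
proof -
  assume ib: "i < b" and bn: "4 + 2*b \<le> n" and c: "even n \<or> 4*b + 3 \<le> n"
  show ?thesis
  proof (cases "4 + 4*b \<le> n")
    case True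
    have "e n b = F (n - 4) + F (n - 4 - 4*b)" by (rule e_big[OF True])
    moreover have "e n i = F (n - 4) + F (n - 4 - 4*i)" by (rule e_big) (use ib True in simp)
    moreover have "F (n - 4 - 4*b) < F (n - 4 - 4*i)" using ib True by (intro F_lt) auto
    ultimately show ?thesis by linarith
  next
    case False
    show ?thesis
    proof (cases "even n")
      case True
      have eb: "e n b + F (4*b + 4 - n) = F (n - 4)" using False bn True by (intro e_small_even) auto
      have "F (4*b + 4 - n) \<ge> 1" using False by (intro F_pos) auto
      show ?thesis
      proof (cases "4 + 4*i \<le> n")
        case True
        hence "e n i = F (n - 4) + F (n - 4 - 4*i)" by (rule e_big)
        thus ?thesis using eb \<open>F (4*b + 4 - n) \<ge> 1\<close> by linarith
      next
        case False2: False
        have ei: "e n i + F (4*i + 4 - n) = F (n - 4)" using False2 bn ib True by (intro e_small_even) auto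
        have "F (4*i + 4 - n) < F (4*b + 4 - n)" using ib False2 by (intro F_lt) auto
        thus ?thesis using eb ei by linarith
      qed
    next
      case odd: False
      hence n: "n = 4*b + 3" using c False by auto
      have eb: "e n b = F (n - 4) + F (4*b + 4 - n)" using n bn odd by (intro e_small_odd) auto
      have ei: "e n i = F (n - 4) + F (n - 4 - 4*i)" using n ib by (intro e_big) auto
      have "F (4*b + 4 - n) < F (n - 4 - 4*i)" using n ib by (intro F_lt) auto
      thus ?thesis using eb ei by linarith
    qed
  qed
qed

lemma e_excl: "odd n \<Longrightarrow> 1 \<le> b \<Longrightarrow> 4 + 2*b \<le> n \<Longrightarrow> n \<le> 4*b + 1 \<Longrightarrow> e n (b - 1) \<le> e n b"
proof -
  assume a: "odd n" "1 \<le> b" "4 + 2*b \<le> n" "n \<le> 4*b + 1"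
  then obtain b' where b: "b = Suc b'" by (cases b) auto
  have eb: "e n b = F (n - 4) + F (4*b + 4 - n)" using a by (intro e_small_odd) auto
  show ?thesis
  proof (cases "4 * b \<le> n")
    case True
    hence "e n b' = F (n - 4) + F (n - 4 - 4*b')" using b by (intro e_big) auto
    moreover have "F (n - 4 - 4*b') \<le> F (4*b + 4 - n)" using True a b by (intro F_mono) auto
    ultimately show ?thesis using eb b by simp
  next
    case False
    hence "e n b' = F (n - 4) + F (4*b' + 4 - n)" using a b by (intro e_small_odd) auto
    moreover have "F (4*b' + 4 - n) \<le> F (4*b + 4 - n)" using b by (intro F_mono) auto
    ultimately show ?thesis using eb b by simp
  qed
qed

lemma F_ge3: "n \<ge> 4 \<Longrightarrow> F n \<ge> 3"
proof -
  assume "n \<ge> 4"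
  hence "F 4 \<le> F n" by (rule F_mono)
  thus ?thesis by (simp add: eval_nat_numeral)
qed

lemma e_W3: "2 \<le> b \<Longrightarrow> 2*b + 6 \<le> n \<Longrightarrow> e n (b - 1) \<le> e n b + F (n - 6)"
proof -
  assume a: "2 \<le> b" "2*b + 6 \<le> n"
  then obtain b' where b: "b = Suc b'" by (cases b) auto
  have F6: "F (n - 6) \<ge> 3" using a by (intro F_ge3) auto
  have bm: "b - 1 = b'" using b by simp
  have "e n b' \<le> e n b + F (n - 6)"
  proof (cases "4 + 4*b \<le> n")
    case True
    hence "e n b = F (n - 4) + F (n - 4 - 4*b)" by (rule e_big)
    moreover have "e n b' = F (n - 4) + F (n - 4 - 4*b')" using True b by (intro e_big) auto
    moreover have "F (n - 4 - 4*b') \<le> F (n - 6)" using a b by (intro F_mono) auto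
    ultimately show ?thesis using b by simp
  next
    case False
    show ?thesis
    proof (cases "4*b \<le> n")
      case True
      have eb': "e n b' = F (n - 4) + F (n - 4 - 4*b')" using True b by (intro e_big) auto
      have "n - 4 - 4*b' \<le> 3" using False b by auto
      hence "F (n - 4 - 4*b') \<le> F 3" by (rule F_mono)
      hence small: "F (n - 4 - 4*b') \<le> 2" by (simp add: eval_nat_numeral)
      show ?thesis
      proof (cases "even n")
        case True
        have eb: "e n b + F (4*b + 4 - n) = F (n - 4)" using False a True by (intro e_small_even) auto
        have "n = 4*b \<or> n = 4*b + 2" using True False \<open>4*b \<le> n\<close> by presburger
        hence "F (n - 4 - 4*b') + F (4*b + 4 - n) \<le> 3" using b by (auto simp: eval_nat_numeral)
        thus ?thesis using eb eb' F6 by linarith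
      next
        case odd: False
        have eb: "e n b = F (n - 4) + F (4*b + 4 - n)" using False a odd by (intro e_small_odd) auto
        thus ?thesis using eb' small F6 by linarith
      qed
    next
      case False2: False
      show ?thesis
      proof (cases "even n")
        case True
        have eb: "e n b + F (4*b + 4 - n) = F (n - 4)" using False a True by (intro e_small_even) auto
        have eb': "e n b' + F (4*b' + 4 - n) = F (n - 4)" using False2 a b True by (intro e_small_even) auto
        have "F (4*b + 4 - n) \<le> F (n - 6)" using a by (intro F_mono) auto
        thus ?thesis using eb eb' b by linarith
      next
        case odd: False
        have eb: "e n b = F (n - 4) + F (4*b + 4 - n)" using False a odd by (intro e_small_odd) auto
        have eb': "e n b' = F (n - 4) + F (4*b' + 4 - n)" using False2 a b odd by (intro e_small_odd) auto
        have "F (4*b' + 4 - n) \<le> F (4*b + 4 - n)" using b by (intro F_mono) auto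
        thus ?thesis using eb eb' b by linarith
      qed
    qed
  qed
  thus ?thesis using bm by simp
qed


lemma dt_excl: "even n \<Longrightarrow> 2 \<le> a \<Longrightarrow> 2*a + 2 \<le> n \<Longrightarrow> n \<le> 4*a - 2 \<Longrightarrow> dt n (a - 1) \<le> dt n a"
proof -
  assume a: "even n" "2 \<le> a" "2*a + 2 \<le> n" "n \<le> 4*a - 2"
  have ai: "a = (a - 1) + 1" using a by simp
  show ?thesis
  proof (cases "n = 4*a - 2")
    case True
    have "n = 2*a + 2*(a-1) + 0" using True a by simp
    from dt_case1[OF ai this] a show ?thesis by simp
  next
    case False
    have "n + (4*a - 2 - n) = 2*a + 2*(a-1)" using a False by simp
    from dt_case3[OF ai this] a show ?thesis by simp
  qed
qed

lemma dt_V2: "2 \<le> a \<Longrightarrow> 2*a + 3 \<le> n \<Longrightarrow> dt n (a - 1) \<le> dt n a + F (n - 6)"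
proof -
  assume a: "2 \<le> a" "2*a + 3 \<le> n"
  have ai: "a = (a - 1) + 1" using a by simp
  show ?thesis
  proof (cases "4*a - 2 \<le> n")
    case True
    have "n = 2*a + 2*(a-1) + (n - (4*a - 2))" using True a by simp
    from dt_case1[OF ai this] a have "dt n (a-1) = dt n a + F (n - (4*a - 2))" by (simp add: eval_nat_numeral)
    moreover have "F (n - (4*a - 2)) \<le> F (n - 6)" using a by (intro F_mono) auto
    ultimately show ?thesis by simp
  next
    case False
    have e: "n + (4*a - 2 - n) = 2*a + 2*(a-1)" using a False by simp
    show ?thesis
    proof (cases "odd n")
      case True
      from dt_case2[OF ai e] a True have "dt n (a-1) = dt n a + F (4*a - 2 - n)" by (simp add: eval_nat_numeral)
      moreover have "F (4*a - 2 - n) \<le> F (n - 6)" using a by (intro F_mono) auto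
      ultimately show ?thesis by simp
    next
      case False
      from dt_case3[OF ai e] a False show ?thesis by simp
    qed
  qed
qed

lemma dr_False_ge2: "M \<ge> 2 \<Longrightarrow> dr False st M = F (M - 1) * (snd st - fst st)"
proof -
  assume "M \<ge> 2"
  then obtain k where "M = Suc (Suc k)" by (cases M; cases "M - 1") auto
  thus ?thesis by (cases st) (simp add: dr_False2)
qed

lemma crit_at: "crit w \<Longrightarrow> w = q @ True # r \<Longrightarrow> tot (True # r) (run q (0,1)) < dr False (run q (0,1)) (Suc (length r))"
  unfolding crit_def by blast

lemma tot_tZ: "fst st \<le> snd st \<Longrightarrow> rest \<noteq> [] \<Longrightarrow>
  tot (tens k @ False # rest) st = F (length rest) * (snd (Tp k st) - fst (Tp k st)) + tot rest (stepb False (Tp k st))"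
  using tot_tens[of st "False # rest" k] tot_F[of rest "Tp k st"] by simp

lemma Tp_u: "snd (Tp (Suc k) st) - fst (Tp (Suc k) st) = snd (Tp k st)"
proof -
  have "Tp (Suc k) st = TT (Tp k st)" using Tp_add[of k 1 st] by simp
  thus ?thesis by (simp add: TT_def)
qed

lemma tot_ge_Z: "fst st \<le> snd st \<Longrightarrow> rest \<noteq> [] \<Longrightarrow>
  F (length rest) * (snd (Tp k st) - fst (Tp k st)) \<le> tot (tens k @ False # rest) st"
  using tot_tZ by simp

lemma prod_lb: "q \<ge> 1 \<Longrightarrow> m \<ge> 1 \<Longrightarrow> F q \<le> u \<Longrightarrow> F (m + q - 2) \<le> F m * u"
proof -
  assume a: "q \<ge> 1" "m \<ge> 1" "F q \<le> u"
  have "F (m + q - 2) \<le> F m * F q" using a by (intro F_prod_ge) auto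
  also have "\<dots> \<le> F m * u" using a by simp
  finally show ?thesis .
qed


lemma Tp_trunk': "Tp a (0, Suc 0) = (F (2*a), F (Suc (2*a)))"
  using Tp_trunk[of a] by simp

declare Tp_trunk[simp] Tp_trunk'[simp]

lemma Tp_trunk_u: "snd (Tp a (0,1)) - fst (Tp a (0,1)) = F (2*a+1) - F (2*a)"
  by (simp add: Tp_trunk Tp_trunk')

lemma trunk_tot:
  assumes "i \<le> a" "rest \<noteq> []" "n = 2*a + 1 + length rest"
  shows "tot (tens (a - i) @ False # rest) (Tp i (0,1)) = dt n a + tot rest (stepb False (Tp a (0,1)))"
proof -
  have le: "fst (Tp i (0,1)) \<le> snd (Tp i (0,1))" by (rule Tp_le) simp
  have "tot (tens (a - i) @ False # rest) (Tp i (0,1)) =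
      F (length rest) * (snd (Tp (a-i) (Tp i (0,1))) - fst (Tp (a-i) (Tp i (0,1)))) + tot rest (stepb False (Tp (a-i) (Tp i (0,1))))"
    by (rule tot_tZ[OF le assms(2)])
  moreover have "Tp (a-i) (Tp i (0,1)) = Tp a (0,1)" using Tp_add[of i "a-i" "(0,1)"] assms(1)
    by (simp del: Tp_trunk Tp_trunk')
  moreover have "length rest = n - 2*a - 1" using assms by simp
  ultimately show ?thesis by (simp add: dt_def Tp_trunk Tp_trunk')
qed

lemma dr_trunk: "2*i + 2 \<le> M + 2*i \<Longrightarrow> M \<ge> 2 \<Longrightarrow> dr False (Tp i (0,1)) M = dt (M + 2*i) i"
  by (simp add: dr_False_ge2 dt_def Tp_trunk Tp_trunk')

lemma trunk_pos:
  assumes c: "crit (tens a @ False # rest)" and ia: "i < a" and r: "rest \<noteq> []"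
    and n: "n = 2*a + 1 + length rest"
  shows "dt n a + tot rest (stepb False (Tp a (0,1))) < dt n i"
proof -
  have "a - i = Suc (a - Suc i)" using ia by arith
  hence w: "tens a @ False # rest = tens i @ True # (False # tens (a - Suc i) @ False # rest)"
    using tens_add[of i "a - i"] ia by simp
  have eq: "True # (False # tens (a - Suc i) @ False # rest) = tens (a - i) @ False # rest"
    using \<open>a - i = Suc (a - Suc i)\<close> by simp
  from crit_at[OF c w] have
    "tot (tens (a - i) @ False # rest) (Tp i (0,1)) < dr False (Tp i (0,1)) (Suc (length (False # tens (a - Suc i) @ False # rest)))"
    by (simp only: eq run_tens)
  moreover have "Suc (length (False # tens (a - Suc i) @ False # rest)) = n - 2*i"
    using n ia by simp
  moreover have "dr False (Tp i (0,1)) (n - 2*i) = dt n i"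
    using n ia r by (simp add: dr_False_ge2 dt_def Tp_trunk Tp_trunk')
  ultimately show ?thesis using trunk_tot[of i a rest n] ia r n by simp
qed

lemma incl_AB: "ends E \<Longrightarrow> crit (tens k @ E)"
  unfolding crit_critP by (rule critP_tail) auto

lemma incl_CD:
  assumes a: "1 \<le> a" and E: "ends E" and n: "n = 2*a + 1 + 2*b + length E"
    and lt: "\<forall>i<a. dt n a < dt n i"
  shows "crit (tens a @ False # tens b @ E)"
  unfolding crit_critP
proof (rule critP_tens_prefix)
  have En: "E \<noteq> []" using E by (auto simp: ends_def)
  have le0: "fst (Tp a (0,1)) \<le> snd (Tp a (0,1))" by (rule Tp_le) simp
  have tt: "tot (False # tens b @ E) (Tp a (0,1)) = dt n a"
  proof -
    have "tot (False # tens b @ E) (Tp a (0,1)) = F (length (tens b @ E)) * (snd (Tp a (0,1)) - fst (Tp a (0,1)))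
        + tot (tens b @ E) (stepb False (Tp a (0,1)))" by (rule tot_F) (use En in simp)
    moreover have "tot (tens b @ E) (stepb False (Tp a (0,1))) = 0"
      using le0 E by (intro tot_tail) (auto simp: stepb_def)
    ultimately show ?thesis using n by (simp add: dt_def Tp_trunk Tp_trunk')
  qed
  show "fst (0::nat, 1::nat) \<le> snd (0::nat, 1::nat)" by simp
  show "False # tens b @ E \<noteq> []" by simp
  fix i assume ia: "i < a"
  have idx: "2*(a-i) + length (False # tens b @ E) = n - 2*i" using n ia by simp
  have "dr False (Tp i (0,1)) (n - 2*i) = dt n i"
    using n ia En by (simp add: dr_False_ge2 dt_def Tp_trunk Tp_trunk')
  hence "dr False (Tp i (0,1)) (2*(a-i) + length (False # tens b @ E)) = dt n i" by (simp only: idx)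
  thus "tot (False # tens b @ E) (Tp a (0,1)) < dr False (Tp i (0,1)) (2*(a-i) + length (False # tens b @ E))"
    using tt lt ia by simp
next
  have "F (Suc (2*a)) \<ge> 1" by (rule F_pos) simp
  hence "fst (stepb False (Tp a (0,1))) < snd (stepb False (Tp a (0,1)))" by (simp add: Tp_trunk stepb_def)
  thus "critP (False # tens b @ E) (Tp a (0,1))" using E by (intro critP_False critP_tail)
qed

lemma incl_C: "1 \<le> a \<Longrightarrow> a \<le> b + 1 \<Longrightarrow> crit (tens a @ False # tens b @ [True])"
  by (rule incl_CD[where n = "2*a + 2*b + 2"]) (auto simp: ends_def intro!: dt_incl)

lemma incl_D: "1 \<le> a \<Longrightarrow> crit (tens a @ False # tens b @ [True, True])"
  by (rule incl_CD[where n = "2*a + 2*b + 3"]) (auto simp: ends_def intro!: dt_incl)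

lemma excl_C:
  assumes c: "crit (tens a @ False # tens b @ [True])" and a: "1 \<le> a"
  shows "a \<le> b + 1"
proof (rule ccontr)
  assume "\<not> a \<le> b + 1"
  hence ab: "b + 2 \<le> a" by simp
  define n where "n = 2*a + 2*b + 2"
  have "dt n a + tot (tens b @ [True]) (stepb False (Tp a (0,1))) < dt n (a - 1)"
    using trunk_pos[OF c, of "a - 1" n] ab by (simp add: n_def)
  moreover have "tot (tens b @ [True]) (stepb False (Tp a (0,1))) = 0"
    by (rule tot_tail) (auto simp: stepb_def ends_def)
  moreover have "dt n (a - 1) \<le> dt n a" using ab by (intro dt_excl) (auto simp: n_def)
  ultimately show False by simp
qed

lemma u_lb:
  assumes "fst s0 \<le> fst s" "snd s0 \<le> snd s" "fst s \<le> snd s" "1 \<le> b"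
  shows "snd (Tp (b - 1) s0) \<le> snd (Tp b s) - fst (Tp b s)"
proof -
  obtain b' where b: "b = Suc b'" using assms(4) by (cases b) auto
  have "snd (Tp b s) - fst (Tp b s) = snd (Tp b' s)" using Tp_u b by simp
  moreover have "snd (Tp b' s0) \<le> snd (Tp b' s)" using Tp_mono[OF assms(1,2)] by simp
  ultimately show ?thesis using b by simp
qed

lemma excl_a2:
  assumes c: "crit (tens a @ False # tens b @ False # y2)" and a: "2 \<le> a" and y: "y2 \<noteq> []"
  shows False
proof -
  define n where "n = 2*a + 2*b + 2 + length y2"
  define s1 where "s1 = stepb False (Tp a (0,1))"
  have s1: "s1 = (F (2*a), F (2*a) + F (Suc (2*a)))" by (simp add: s1_def stepb_def)
  have t: "dt n a + tot (tens b @ False # y2) s1 < dt n (a - 1)"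
    using trunk_pos[OF c, of "a - 1" n] a by (simp add: n_def s1_def)
  have le1: "fst s1 \<le> snd s1" using s1 by simp
  have u: "F (2*a + 2*b - 1) \<le> snd (Tp b s1) - fst (Tp b s1)"
  proof (cases b)
    case 0
    have "F (2*a - 1) \<le> F (Suc (2*a))" by (rule F_mono) simp
    thus ?thesis using 0 s1 by simp
  next
    case (Suc b')
    have "snd (Tp (b - 1) (Tp a (0,1))) \<le> snd (Tp b s1) - fst (Tp b s1)"
      using Suc by (intro u_lb) (auto simp: s1)
    moreover have "Tp (b - 1) (Tp a (0,1)) = Tp (a + (b - 1)) (0,1)" by (simp only: Tp_add)
    moreover have "snd (Tp (a + (b - 1)) (0,1)) = F (Suc (2*(a + (b-1))))" by (simp only: Tp_trunk snd_conv)
    moreover have "Suc (2*(a + (b-1))) = 2*a + 2*b - 1" using Suc by simp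
    ultimately show ?thesis by (simp only:)
  qed
  have p: "F (length y2 + (2*a + 2*b - 1) - 2) \<le> F (length y2) * (snd (Tp b s1) - fst (Tp b s1))"
    using y a u by (intro prod_lb) (auto simp: Suc_le_eq)
  have "length y2 + (2*a + 2*b - 1) - 2 = n - 5" using a by (simp add: n_def)
  with p have "F (n - 5) \<le> F (length y2) * (snd (Tp b s1) - fst (Tp b s1))" by simp
  moreover have "F (n - 6) \<le> F (n - 5)" by (rule F_mono) simp
  moreover have "F (length y2) * (snd (Tp b s1) - fst (Tp b s1)) \<le> tot (tens b @ False # y2) s1"
    using tot_ge_Z[OF le1 y] by simp
  moreover have "dt n (a - 1) \<le> dt n a + F (n - 6)" using a y by (intro dt_V2) (auto simp: n_def Suc_le_eq)
  ultimately show False using t by linarith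
qed


lemma Tp_13': "Tp i (Suc 0, 3) = (L (2*i+1), L (2*i+2))"
  using Tp_13[of i] by simp

lemma Tp_13'': "Tp i (Suc 0, Suc (Suc (Suc 0))) = (L (2*i+1), L (2*i+2))"
  using Tp_13[of i] by (simp add: numeral_3_eq_3)

lemma L_pos: "L n \<ge> 1"
  by (induction n rule: L.induct) auto

declare Tp_13[simp] Tp_13'[simp] Tp_13''[simp]

lemma L_2: "L (2*b + 2) = L (2*b + 1) + L (2*b)"
  by (simp add: eval_nat_numeral)

lemma Tp_13_u: "snd (Tp b (1,3)) - fst (Tp b (1,3)) = L (2*b)"
  using L_2[of b] by (simp add: Tp_13)

lemma sub_tot:
  assumes "i \<le> b" "rest \<noteq> []" "n = 4 + 2*b + length rest"
  shows "tot (tens (b - i) @ False # rest) (Tp i (1,3)) = e n b + tot rest (stepb False (Tp b (1,3)))"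
proof -
  have le: "fst (Tp i (1,3)) \<le> snd (Tp i (1,3))" by (rule Tp_le) simp
  have "tot (tens (b - i) @ False # rest) (Tp i (1,3)) =
      F (length rest) * (snd (Tp (b-i) (Tp i (1,3))) - fst (Tp (b-i) (Tp i (1,3)))) + tot rest (stepb False (Tp (b-i) (Tp i (1,3))))"
    by (rule tot_tZ[OF le assms(2)])
  moreover have "Tp (b-i) (Tp i (1,3)) = Tp b (1,3)" using Tp_add[of i "b-i" "(1,3)"] assms(1)
    by (simp del: Tp_13 Tp_13' Tp_13'')
  moreover have "length rest = n - 4 - 2*b" using assms by simp
  ultimately show ?thesis using Tp_13_u[of b] by (simp add: e_def)
qed

lemma run_100: "run [True, False, False] (0,1) = (1,3)"
  by (simp add: stepb_def)

lemma sub_pos: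
  assumes c: "crit ([True, False, False] @ tens b @ False # rest)" and ib: "i < b" and r: "rest \<noteq> []"
    and n: "n = 4 + 2*b + length rest"
  shows "e n b + tot rest (stepb False (Tp b (1,3))) < e n i"
proof -
  have "b - i = Suc (b - Suc i)" using ib by arith
  hence w: "[True, False, False] @ tens b @ False # rest = ([True, False, False] @ tens i) @ True # (False # tens (b - Suc i) @ False # rest)"
    using tens_add[of i "b - i"] ib by simp
  have eq: "True # (False # tens (b - Suc i) @ False # rest) = tens (b - i) @ False # rest"
    using \<open>b - i = Suc (b - Suc i)\<close> by simp
  have rq: "run ([True, False, False] @ tens i) (0,1) = Tp i (1,3)" by (simp add: run_tens stepb_def)
  from crit_at[OF c w] have
    "tot (tens (b - i) @ False # rest) (Tp i (1,3)) < dr False (Tp i (1,3)) (Suc (length (False # tens (b - Suc i) @ False # rest)))"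
    by (simp only: eq rq)
  moreover have "Suc (length (False # tens (b - Suc i) @ False # rest)) = n - 3 - 2*i"
    using n ib by simp
  moreover have "dr False (Tp i (1,3)) (n - 3 - 2*i) = e n i"
  proof -
    have "n - 3 - 2*i \<ge> 2" using n ib r by (cases rest) auto
    hence "dr False (Tp i (1,3)) (n - 3 - 2*i) = F (n - 3 - 2*i - 1) * L (2*i)"
      using Tp_13_u[of i] by (simp add: dr_False_ge2)
    moreover have "n - 3 - 2*i - 1 = n - 4 - 2*i" by simp
    ultimately show ?thesis by (simp add: e_def)
  qed
  ultimately show ?thesis using sub_tot[of i b rest n] ib r n by simp
qed

lemma root1:
  assumes c: "crit ([True, False, False] @ tens b @ False # rest)" and r: "rest \<noteq> []"
    and n: "n = 4 + 2*b + length rest"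
  shows "F (n - 3) + e n b + tot rest (stepb False (Tp b (1,3))) < F (n - 1)"
proof -
  have c': "crit (tens 1 @ False # (tens b @ False # rest))" using c by simp
  have "dt n 1 + tot (tens b @ False # rest) (stepb False (Tp 1 (0,1))) < dt n 0"
    using trunk_pos[OF c', of 0 n] n by simp
  moreover have "stepb False (Tp 1 (0,1)) = Tp 0 (1,3)" by (simp add: stepb_def eval_nat_numeral)
  moreover have "tot (tens (b - 0) @ False # rest) (Tp 0 (1,3)) = e n b + tot rest (stepb False (Tp b (1,3)))"
    using sub_tot[of 0 b rest n] r n by simp
  moreover have "dt n 1 = F (n - 3)" by (simp add: dt_Suc eval_nat_numeral)
  moreover have "dt n 0 = F (n - 1)" by (rule dt_0)
  ultimately show ?thesis by simp
qed

lemma F_32: "k \<noteq> 1 \<Longrightarrow> 3 * F k \<le> 2 * F (Suc k)"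
proof (cases k)
  case 0 thus ?thesis by simp
next
  case (Suc j)
  assume "k \<noteq> 1"
  with Suc obtain i where j: "j = Suc i" by (cases j) auto
  have "F (Suc i) \<ge> F i" by (rule F_Suc_mono)
  thus ?thesis using Suc j by simp
qed

lemma F_rec5: "n \<ge> 5 \<Longrightarrow> F (n - 1) = F (n - 3) + 2 * F (n - 4) + F (n - 5)"
proof -
  assume "n \<ge> 5"
  then obtain k where k: "n = k + 5" using le_Suc_ex by (metis add.commute)
  show ?thesis using k by (simp add: eval_nat_numeral)
qed

lemma F_mono_lt: "2 \<le> m \<Longrightarrow> F m < F (Suc m)"
proof -
  assume "2 \<le> m"
  then obtain j where "m = Suc j" "j \<ge> 1" by (cases m) auto
  thus ?thesis using F_pos[of j] by simp
qed

lemma incl_EF: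
  assumes E: "ends E" and n: "n = 2*b + 2*c + 5 + length E - 1"
    and lt: "\<forall>i<b. e n b < e n i" and r0: "e n b < F (n - 2)"
  shows "crit ([True, False, False] @ tens b @ False # tens c @ E)"
proof -
  have En: "E \<noteq> []" using E by (auto simp: ends_def)
  have n': "n = 4 + 2*b + length (tens c @ E)" using n En by (cases E) auto
  have w: "[True, False, False] @ tens b @ False # tens c @ E = tens 1 @ (False # tens b @ False # tens c @ E)" by simp
  have t0: "tot (tens c @ E) (stepb False (Tp b (1,3))) = 0"
    using E by (intro tot_tail) (auto simp: stepb_def)
  have tb: "tot (tens (b - 0) @ False # tens c @ E) (Tp 0 (1,3)) = e n b"
    using sub_tot[of 0 b "tens c @ E" n] n' t0 En by simp
  show ?thesis unfolding crit_critP w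
  proof (rule critP_tens_prefix)
    show "fst (0::nat,1::nat) \<le> snd (0::nat,1::nat)" by simp
    show "False # tens b @ False # tens c @ E \<noteq> []" by simp
    fix i assume "i < (1::nat)"
    hence i: "i = 0" by simp
    have "tot (False # tens b @ False # tens c @ E) (Tp 1 (0,1)) = F (length (tens b @ False # tens c @ E)) * 1 + tot (tens b @ False # tens c @ E) (1,3)"
      using tot_F[of "tens b @ False # tens c @ E" "Tp 1 (0,1)"] by (simp add: stepb_def eval_nat_numeral)
    also have "length (tens b @ False # tens c @ E) = n - 3" using n' by simp
    also have "tot (tens b @ False # tens c @ E) (1,3) = e n b" using tb by (simp add: numeral_3_eq_3)
    finally have tt: "tot (False # tens b @ False # tens c @ E) (Tp 1 (0,1)) = F (n - 3) + e n b" by simp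
    have idx: "2 * (1 - 0) + length (False # tens b @ False # tens c @ E) = Suc (n - 1)" using n' by simp
    have "dr False (Tp 0 (0,1)) (Suc (n - 1)) = F (n - 1)"
      using n' by (simp add: dr_False_ge2)
    hence "dr False (Tp 0 (0,1)) (2 * (1 - 0) + length (False # tens b @ False # tens c @ E)) = F (n - 1)"
      by (simp only: idx)
    moreover have "F (n - 1) = F (n - 2) + F (n - 3)"
    proof -
      have "n \<ge> 4" using n' by simp
      then obtain k where "n = k + 4" using le_Suc_ex by (metis add.commute)
      thus ?thesis by (simp add: eval_nat_numeral)
    qed
    ultimately show "tot (False # tens b @ False # tens c @ E) (Tp 1 (0,1)) < dr False (Tp i (0,1)) (2 * (1 - i) + length (False # tens b @ False # tens c @ E))"
      using tt r0 i by simp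
  next
    show "critP (False # tens b @ False # tens c @ E) (Tp 1 (0,1))"
    proof (rule critP_False)
      have s: "stepb False (Tp 1 (0,1)) = (1,3)" by (simp add: stepb_def eval_nat_numeral)
      show "critP (tens b @ False # tens c @ E) (stepb False (Tp 1 (0,1)))" unfolding s
      proof (rule critP_tens_prefix)
        show "fst (1::nat,3::nat) \<le> snd (1::nat,3::nat)" by simp
        show "False # tens c @ E \<noteq> []" by simp
        fix i assume ib: "i < b"
        have "tot (False # tens c @ E) (Tp b (1,3)) = e n b"
          using tot_F[of "tens c @ E" "Tp b (1,3)"] t0 En Tp_13_u[of b] n' by (simp add: e_def)
        moreover have "dr False (Tp i (1,3)) (2 * (b - i) + length (False # tens c @ E)) = e n i"
        proof -
          have "2 * (b - i) + length (False # tens c @ E) = Suc (n - 4 - 2*i)" using ib n' by simp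
          moreover have "n - 4 - 2*i \<ge> 1" using ib n' En by (cases E) auto
          ultimately show ?thesis using Tp_13_u[of i] by (simp add: dr_False_ge2 e_def)
        qed
        ultimately show "tot (False # tens c @ E) (Tp b (1,3)) < dr False (Tp i (1,3)) (2 * (b - i) + length (False # tens c @ E))"
          using lt ib by simp
      next
        have "fst (stepb False (Tp b (1,3))) < snd (stepb False (Tp b (1,3)))"
          using L_pos[of "2*b"] by (simp add: Tp_13 stepb_def)
        thus "critP (False # tens c @ E) (Tp b (1,3))" using E by (intro critP_False critP_tail)
      qed
    qed
  qed
qed

lemma e_0: "e n 0 = 2 * F (n - 4)" by (simp add: e_def)

lemma F_n2: "n \<ge> 4 \<Longrightarrow> F (n - 2) = F (n - 3) + F (n - 4)"
proof -
  assume "n \<ge> 4"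
  then obtain k where "n = k + 4" using le_Suc_ex by (metis add.commute)
  thus ?thesis by (simp add: eval_nat_numeral)
qed

lemma e_r0: "n \<ge> 6 \<Longrightarrow> (\<forall>i<b. e n b < e n i) \<Longrightarrow> e n b < F (n - 2)"
proof -
  assume n: "n \<ge> 6" and lt: "\<forall>i<b. e n b < e n i"
  have f: "F (n - 2) = F (n - 3) + F (n - 4)" using n by (intro F_n2) auto
  have "F (n - 4) < F (n - 3)"
  proof -
    have "F (n - 4) < F (Suc (n - 4))" using n by (intro F_mono_lt) auto
    moreover have "Suc (n - 4) = n - 3" using n by simp
    ultimately show ?thesis by simp
  qed
  hence e0: "e n 0 < F (n - 2)" using f by (simp add: e_0)
  show ?thesis
  proof (cases b)
    case 0 thus ?thesis using e0 by simp
  next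
    case (Suc b') thus ?thesis using lt e0 by (metis order.strict_trans zero_less_Suc)
  qed
qed

lemma incl_E: "b \<le> c + 1 \<Longrightarrow> \<not> (b = 0 \<and> c = 0) \<Longrightarrow> crit ([True, False, False] @ tens b @ False # tens c @ [True])"
proof -
  assume bc: "b \<le> c + 1" "\<not> (b = 0 \<and> c = 0)"
  define n where "n = 2*b + 2*c + 5"
  have lt: "\<forall>i<b. e n b < e n i" using bc by (auto simp: n_def intro!: e_incl)
  have "n \<ge> 6" using bc by (auto simp: n_def)
  hence "e n b < F (n - 2)" using lt by (intro e_r0)
  thus ?thesis using lt by (intro incl_EF[where n = n]) (auto simp: ends_def n_def)
qed

lemma incl_F: "crit ([True, False, False] @ tens b @ False # tens c @ [True, True])"
proof -
  define n where "n = 2*b + 2*c + 6"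
  have lt: "\<forall>i<b. e n b < e n i" by (auto simp: n_def intro!: e_incl)
  have "n \<ge> 6" by (auto simp: n_def)
  hence "e n b < F (n - 2)" using lt by (intro e_r0)
  thus ?thesis using lt by (intro incl_EF[where n = n]) (auto simp: ends_def n_def)
qed

lemma excl_E:
  assumes c: "crit ([True, False, False] @ tens b @ False # tens c @ [True])"
  shows "b \<le> c + 1 \<and> \<not> (b = 0 \<and> c = 0)"
proof
  define n where "n = 2*b + 2*c + 5"
  have t0: "tot (tens c @ [True]) (stepb False (Tp b (1,3))) = 0"
    by (intro tot_tail) (auto simp: stepb_def ends_def)
  show "b \<le> c + 1"
  proof (rule ccontr)
    assume "\<not> b \<le> c + 1"
    hence bc: "c + 2 \<le> b" by simp
    have "e n b + 0 < e n (b - 1)" using sub_pos[OF c, of "b - 1" "n"] bc t0 by (simp add: n_def)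
    moreover have "e n (b - 1) \<le> e n b" using bc by (intro e_excl) (auto simp: n_def)
    ultimately show False by simp
  qed
  show "\<not> (b = 0 \<and> c = 0)"
  proof
    assume bc: "b = 0 \<and> c = 0"
    have "F (n - 3) + e n b + 0 < F (n - 1)" using root1[OF c, of n] t0 by (simp add: n_def)
    thus False using bc by (simp add: n_def e_def eval_nat_numeral)
  qed
qed

lemma Tp_14_u: "F (2*c + 2) \<le> snd (Tp c (1,4)) - fst (Tp c (1,4))"
proof -
  have s: "snd (Tp c (1,4)) = F (2*c) + 4 * F (Suc (2*c))" using Tp_snd[of c 1 4] by simp
  have f: "fst (Tp c (1,4)) + F (2*c) = F (Suc (2*c)) + 4 * F (2*c)" using Tp_fst[of c 1 4] by simp
  have "3 * F (2*c) \<le> 2 * F (Suc (2*c))" by (intro F_32) auto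
  moreover have "F (2*c + 2) = F (2*c) + F (Suc (2*c))" by (simp add: eval_nat_numeral)
  ultimately show ?thesis using s f by linarith
qed

lemma excl_b0:
  assumes c: "crit ([True, False, False, False] @ tens c @ False # y3)" and y: "y3 \<noteq> []"
  shows False
proof -
  define n where "n = 5 + 2*c + length y3"
  have c': "crit ([True, False, False] @ tens 0 @ False # (tens c @ False # y3))" using c by simp
  have r: "F (n - 3) + e n 0 + tot (tens c @ False # y3) (stepb False (Tp 0 (1,3))) < F (n - 1)"
    using root1[OF c', of n] by (simp add: n_def)
  have s: "stepb False (Tp 0 (1,3)) = (1,4)" by (simp add: stepb_def)
  have le: "fst (1::nat,4::nat) \<le> snd (1::nat,4::nat)" by simp
  have "F (length y3) * (snd (Tp c (1,4)) - fst (Tp c (1,4))) \<le> tot (tens c @ False # y3) (1,4)"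
    using tot_ge_Z[OF le y] by simp
  moreover have "F (length y3 + (2*c+2) - 2) \<le> F (length y3) * (snd (Tp c (1,4)) - fst (Tp c (1,4)))"
    using y Tp_14_u[of c] by (intro prod_lb) (auto simp: Suc_le_eq)
  moreover have "length y3 + (2*c+2) - 2 = n - 5" by (simp add: n_def)
  moreover have "F (n - 1) = F (n - 3) + 2 * F (n - 4) + F (n - 5)" by (intro F_rec5) (simp add: n_def)
  ultimately show False using r s by (simp add: e_0)
qed


lemma excl_b2:
  assumes c: "crit ([True, False, False] @ tens b @ False # tens c @ False # y3)" and b: "2 \<le> b" and y: "y3 \<noteq> []"
  shows False
proof -
  define n where "n = 5 + 2*b + 2*c + length y3"
  define s where "s = stepb False (Tp b (1,3))"
  have sv: "s = (L (2*b+1), L (2*b+1) + L (2*b+2))" by (simp add: s_def stepb_def)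
  have sp: "e n b + tot (tens c @ False # y3) s < e n (b - 1)"
    using sub_pos[OF c, of "b - 1" n] b by (simp add: n_def s_def)
  have le: "fst s \<le> snd s" using sv by simp
  have L2: "L (2*b+2) = F (2*b+1) + F (2*b+3)" using L_F[of "2*b+1"] by (simp add: eval_nat_numeral)
  have L1: "L (2*b+1) = F (2*b) + F (2*b+2)" using L_F[of "2*b"] by (simp add: eval_nat_numeral)
  have u: "F (2*b + 2*c + 1) \<le> snd (Tp c s) - fst (Tp c s)"
  proof (cases c)
    case 0
    have "F (2*b+1) \<le> L (2*b+2)" using L2 by simp
    moreover have "snd s - fst s = L (2*b+2)" using sv by simp
    ultimately show ?thesis using 0 by simp
  next
    case (Suc c')
    define s0 where "s0 = Tp (b+1) (0::nat, 1::nat)"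
    have s0: "s0 = (F (2*b+2), F (2*b+3))" by (simp add: s0_def eval_nat_numeral)
    have "F (2*b+3) \<le> L (2*b+2)" using L2 by simp
    hence "snd (Tp (c - 1) s0) \<le> snd (Tp c s) - fst (Tp c s)"
      using Suc le L1 by (intro u_lb) (auto simp: s0 sv)
    moreover have "Tp (c - 1) s0 = Tp (b + 1 + (c - 1)) (0,1)" unfolding s0_def by (simp only: Tp_add)
    moreover have "snd (Tp (b + 1 + (c - 1)) (0,1)) = F (Suc (2*(b + 1 + (c-1))))" by (simp only: Tp_trunk snd_conv)
    moreover have "Suc (2*(b + 1 + (c-1))) = 2*b + 2*c + 1" using Suc by simp
    ultimately show ?thesis by (simp only:)
  qed
  have p: "F (length y3 + (2*b + 2*c + 1) - 2) \<le> F (length y3) * (snd (Tp c s) - fst (Tp c s))"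
    using y u by (intro prod_lb) (auto simp: Suc_le_eq)
  have "length y3 + (2*b + 2*c + 1) - 2 = n - 6" using y by (cases y3) (auto simp: n_def)
  with p have "F (n - 6) \<le> F (length y3) * (snd (Tp c s) - fst (Tp c s))" by simp
  moreover have "F (length y3) * (snd (Tp c s) - fst (Tp c s)) \<le> tot (tens c @ False # y3) s"
    using tot_ge_Z[OF le y] by simp
  moreover have "e n (b - 1) \<le> e n b + F (n - 6)" using b y by (intro e_W3) (auto simp: n_def Suc_le_eq)
  ultimately show False using sp by linarith
qed

lemma Tp_411: "snd (Tp c (4,11)) = 4 * F (2*c) + 11 * F (Suc (2*c))"
     "fst (Tp c (4,11)) + 4 * F (2*c) = 4 * F (Suc (2*c)) + 11 * F (2*c)"
  using Tp_snd[of c 4 11] Tp_fst[of c 4 11] by (simp_all add: algebra_simps)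

lemma Fexp: "F (2*c+2) = F (2*c) + F (Suc (2*c))" "F (2*c+3) = F (2*c) + 2 * F (Suc (2*c))"
     "F (2*c+4) = 2 * F (2*c) + 3 * F (Suc (2*c))" "F (2*c+5) = 3 * F (2*c) + 5 * F (Suc (2*c))"
  by (simp_all add: eval_nat_numeral)

lemma sub1_pos:
  assumes c: "crit ([True, False, False, True, False, False] @ tens c @ False # y3)" and y: "y3 \<noteq> []"
  shows "3 * F (1 + 2*c + length y3) + tot (tens c @ False # y3) (4,11) < 2 * F (3 + 2*c + length y3)"
proof -
  define n where "n = 7 + 2*c + length y3"
  have c': "crit ([True, False, False] @ tens 1 @ False # (tens c @ False # y3))" using c by simp
  have "e n 1 + tot (tens c @ False # y3) (stepb False (Tp 1 (1,3))) < e n 0"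
    using sub_pos[OF c', of 0 n] by (simp add: n_def)
  moreover have "stepb False (Tp 1 (1,3)) = (4,11)" by (simp add: stepb_def eval_nat_numeral)
  moreover have "e n 1 = 3 * F (1 + 2*c + length y3)" by (simp add: e_def n_def eval_nat_numeral)
  moreover have "e n 0 = 2 * F (7 + 2*c + length y3 - 4)" by (simp add: e_def n_def)
  moreover have "7 + 2*c + length y3 - 4 = 3 + 2*c + length y3" by simp
  ultimately show ?thesis by (simp add: n_def)
qed

lemma key_ineq:
  assumes m: "m \<ge> 3"
  shows "4 * F m * F (2*c) + 2 * F (m - 1) * F (2*c) + F (m - 1) * F (Suc (2*c)) \<le> 4 * F m * F (Suc (2*c))"
proof -
  define A where "A = F m"
  define B where "B = F (m - 1)"
  define P where "P = F (2*c)"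
  define Q where "Q = F (Suc (2*c))"
  have AB: "3 * B \<le> 2 * A"
  proof -
    have "3 * F (m - 1) \<le> 2 * F (Suc (m - 1))" using m by (intro F_32) auto
    moreover have "Suc (m - 1) = m" using m by simp
    ultimately show ?thesis by (simp add: A_def B_def)
  qed
  show ?thesis
  proof (cases c)
    case 0
    hence "P = 0" "Q = 1" by (simp_all add: P_def Q_def)
    moreover have "F (m - 1) \<le> F m" using F_mono[of "m-1" m] by simp
    ultimately show ?thesis by (simp add: P_def Q_def)
  next
    case (Suc c')
    define R where "R = F (Suc (2*c'))"
    define S where "S = F (2*c')"
    have PQ: "P = R + S" "Q = P + R" by (simp_all add: P_def Q_def R_def S_def Suc)
    have SR: "3 * S \<le> 2 * R" unfolding S_def R_def by (intro F_32) auto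
    have h1: "(3*B) * (2*R) \<le> (2*A) * (2*R)" by (rule mult_right_mono[OF AB]) simp
    have h2: "B * (3 * P + R) \<le> B * (6 * R)" using SR PQ by (intro mult_left_mono) auto
    have q1: "(3*B) * (2*R) = 6*(B*R)" "(2*A) * (2*R) = 4*(A*R)" "B * (6 * R) = 6*(B*R)"
      "B * (3 * P + R) = 3*(B*P) + B*R" "4 * A * R = 4*(A*R)" by (simp_all add: algebra_simps)
    have "B * (3 * P + R) \<le> 4 * A * R" using h1 h2 q1 by linarith
    hence "4 * A * P + 2 * B * P + B * Q \<le> 4 * A * Q" using PQ by (simp add: algebra_simps)
    thus ?thesis by (simp add: A_def B_def P_def Q_def)
  qed
qed

lemma excl_b1:
  assumes c: "crit ([True, False, False, True, False, False] @ tens c @ False # y3)" and y: "y3 \<noteq> []"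
    and l: "last y3 = True"
  shows "y3 = [True, True] \<and> 2 \<le> c"
proof (rule ccontr)
  assume nG: "\<not> (y3 = [True, True] \<and> 2 \<le> c)"
  define m where "m = length y3"
  define P where "P = F (2*c)"
  define Q where "Q = F (Suc (2*c))"
  define u where "u = snd (Tp c (4,11)) - fst (Tp c (4,11))"
  define s' where "s' = stepb False (Tp c (4,11))"
  have sp: "3 * F (1 + 2*c + m) + tot (tens c @ False # y3) (4,11) < 2 * F (3 + 2*c + m)"
    using sub1_pos[OF c y] by (simp add: m_def)
  have tt: "tot (tens c @ False # y3) (4,11) = F m * u + tot y3 s'"
    using tot_tZ[of "(4,11)" y3 c] y by (simp add: m_def u_def s'_def)
  have PQ: "P \<le> Q" unfolding P_def Q_def by (rule F_Suc_mono)
  have ue: "u + 3 * P = 7 * Q" "snd (Tp c (4,11)) = 4 * P + 11 * Q"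
    using Tp_411[of c] PQ by (auto simp: u_def P_def Q_def)
  have m1: "m \<ge> 1" using y by (cases y3) (auto simp: m_def)
  show False
  proof (cases "m \<le> 2")
    case True
    show False
    proof (cases "m = 1")
      case True
      have "F (1 + 2*c + m) = P + Q" "F (3 + 2*c + m) = 2 * P + 3 * Q" using True Fexp[of c]
        by (simp_all add: P_def Q_def add.commute)
      thus False using sp tt True ue PQ by simp
    next
      case False
      hence m2: "m = 2" using True m1 by simp
      then obtain b1 where y3: "y3 = [b1, True]" using l unfolding m_def
        by (cases y3; cases "tl y3") auto
      have F13: "F (1 + 2*c + m) = P + 2 * Q" "F (3 + 2*c + m) = 3 * P + 5 * Q" using m2 Fexp[of c]
        by (simp_all add: P_def Q_def add.commute)
      have tt': "tot (tens c @ False # y3) (4,11) = u + tot y3 s'" using tt m2 by (simp add: eval_nat_numeral)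
      show False
      proof (cases b1)
        case True
        hence "c \<le> 1" using nG y3 by auto
        hence "Q \<ge> 2 * P" by (cases c) (auto simp: P_def Q_def eval_nat_numeral)
        thus False using sp tt' ue F13 by linarith
      next
        case False
        have "tot y3 s' \<ge> snd s' - fst s'"
          using False y3 by (cases s') (simp add: dr_False2 dr_True1)
        moreover have "snd s' - fst s' = snd (Tp c (4,11))" by (simp add: s'_def stepb_def)
        ultimately show False using sp tt' ue F13 PQ by linarith
      qed
    qed
  next
    case False
    hence m3: "m \<ge> 3" by simp
    have fa: "F (m - 1 + Suc (2*c + 1)) = F (Suc (2*c+1)) * F (Suc (m - 1)) + F (2*c + 1) * F (m - 1)"
      by (rule F_add)
    have fb: "F (m - 1 + Suc (2*c + 3)) = F (Suc (2*c+3)) * F (Suc (m - 1)) + F (2*c + 3) * F (m - 1)"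
      by (rule F_add)
    have i1: "m - 1 + Suc (2*c + 1) = 1 + 2*c + m" "m - 1 + Suc (2*c + 3) = 3 + 2*c + m" "Suc (m - 1) = m"
      using m3 by auto
    have e1: "F (1 + 2*c + m) = (P + Q) * F m + Q * F (m - 1)"
      using fa i1 Fexp[of c] by (simp add: P_def Q_def eval_nat_numeral add_ac)
    have e2: "F (3 + 2*c + m) = (2*P + 3*Q) * F m + (P + 2*Q) * F (m - 1)"
      using fb i1 Fexp[of c] by (simp add: P_def Q_def eval_nat_numeral add_ac)
    have k: "4 * F m * P + 2 * F (m - 1) * P + F (m - 1) * Q \<le> 4 * F m * Q"
      using key_ineq[OF m3, of c] by (simp add: P_def Q_def)
    have "F m * (u + 3 * P) = F m * (7 * Q)" using ue(1) by simp
    hence "F m * u + F m * (3 * P) = F m * (7 * Q)" by (simp only: distrib_left)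
    thus False using sp tt e1 e2 k by (simp add: algebra_simps)
  qed
qed

lemma inv_411: "3 * fst (Tp i (4,11)) < 2 * snd (Tp i (4,11))"
proof (induction i)
  case 0 thus ?case by simp
next
  case (Suc i)
  have lt: "fst (Tp i (4,11)) < snd (Tp i (4,11))" by (rule Tp_lt) simp
  have "Tp (Suc i) (4,11) = TT (Tp i (4,11))" using Tp_add[of i 1 "(4,11)"] by simp
  thus ?case using lt by (simp add: TT_def)
qed

lemma G_c:
  assumes ij: "i < j"
  shows "snd (Tp j (4,11)) - fst (Tp j (4,11)) < dr False (Tp i (4,11)) (2*(j-i) + 3)"
proof -
  define k where "k = j - 1 - i"
  define x where "x = fst (Tp i (4,11))"
  define y where "y = snd (Tp i (4,11))"
  have xy: "x < y" unfolding x_def y_def by (rule Tp_lt) simp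
  have inv: "3 * x < 2 * y" using inv_411[of i] by (simp add: x_def y_def)
  obtain j' where j': "j = Suc j'" using ij by (cases j) auto
  have "snd (Tp j (4,11)) - fst (Tp j (4,11)) = snd (Tp j' (4,11))" using Tp_u j' by simp
  also have "Tp j' (4,11) = Tp k (Tp i (4,11))" using Tp_add[of i k] ij j' by (simp add: k_def)
  also have "snd (Tp k (Tp i (4,11))) = F (2*k) * x + F (Suc (2*k)) * y"
    using Tp_snd[of k x y] by (simp add: x_def y_def)
  finally have u: "snd (Tp j (4,11)) - fst (Tp j (4,11)) = F (2*k) * x + F (Suc (2*k)) * y" .
  have "dr False (Tp i (4,11)) (2*(j-i) + 3) = F (2*(j-i) + 2) * (y - x)"
    by (simp add: dr_False_ge2 x_def y_def)
  also have "2*(j-i) + 2 = 2*k + 4" using ij by (simp add: k_def)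
  finally have d: "dr False (Tp i (4,11)) (2*(j-i) + 3) = F (2*k + 4) * (y - x)" .
  define P where "P = F (2*k)"
  define Q where "Q = F (Suc (2*k))"
  define dd where "dd = y - x"
  have yd: "y = x + dd" using xy by (simp add: dd_def)
  have x2: "x < 2 * dd" using inv yd by simp
  have Q1: "Q \<ge> 1" unfolding Q_def by (rule F_pos) simp
  have F4: "F (2*k + 4) = 2 * P + 3 * Q" using Fexp(3)[of k] by (simp add: P_def Q_def)
  have "(P + Q) * x < (P + Q) * (2 * dd)" using x2 Q1 by simp
  hence "P * x + Q * (x + dd) < (2 * P + 3 * Q) * dd" by (simp add: algebra_simps)
  moreover have "y - x = dd" by (simp add: dd_def)
  ultimately show ?thesis using u d F4 yd by (simp only: P_def[symmetric] Q_def[symmetric])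
qed



lemma incl_G:
  assumes j: "2 \<le> j"
  shows "crit ([True, False, False, True, False, False] @ tens j @ [False, True, True])"
proof -
  define n where "n = 2*j + 9"
  define P where "P = F (2*j)"
  define Q where "Q = F (Suc (2*j))"
  define u where "u = snd (Tp j (4,11)) - fst (Tp j (4,11))"
  have PQ: "P \<le> Q" unfolding P_def Q_def by (rule F_Suc_mono)
  have ue: "u + 3 * P = 7 * Q" using Tp_411[of j] PQ by (auto simp: u_def P_def Q_def)
  have Q2: "Q < 2 * P"
  proof -
    have "F (2*j - 1) < F (Suc (2*j - 1))" using j by (intro F_mono_lt) auto
    moreover have "Suc (2*j - 1) = 2*j" using j by simp
    moreover have "Q = P + F (2*j - 1)"
    proof -
      have "Suc (2*j) = Suc (Suc (2*j - 1))" using j by simp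
      thus ?thesis unfolding P_def Q_def by (simp only: F.simps) (use \<open>Suc (2*j - 1) = 2*j\<close> in simp)
    qed
    ultimately show ?thesis by (simp add: P_def)
  qed
  have tu: "tot (tens j @ [False, True, True]) (4,11) = u"
  proof -
    have "tot (tens j @ [False, True, True]) (4,11) = tot [False, True, True] (Tp j (4,11))"
      by (intro tot_tens) auto
    also have "\<dots> = F 2 * u + tot [True, True] (stepb False (Tp j (4,11)))"
      using tot_F[of "[True,True]" "Tp j (4,11)"] by (simp add: u_def numeral_2_eq_2 del: tot.simps)
    also have "tot [True, True] (stepb False (Tp j (4,11))) = 0" by (intro tot_TT) (simp add: stepb_def)
    finally show ?thesis by (simp add: eval_nat_numeral)
  qed
  have e1: "e n 1 = 3 * (P + 2 * Q)" using Fexp(2)[of j] by (simp add: e_def n_def P_def Q_def eval_nat_numeral add.commute)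
  have e0: "e n 0 = 2 * (3 * P + 5 * Q)" using Fexp(4)[of j] by (simp add: e_def n_def P_def Q_def add.commute)
  have b: "e n 1 + u < e n 0" unfolding e1 e0 using ue Q2 by arith
  have rest1: "tot (tens (1 - 0) @ False # tens j @ [False, True, True]) (Tp 0 (1,3)) = e n 1 + u"
    using sub_tot[of 0 1 "tens j @ [False, True, True]" n] tu by (simp add: n_def stepb_def eval_nat_numeral)
  have w: "[True, False, False, True, False, False] @ tens j @ [False, True, True] =
      tens 1 @ (False # (tens 1 @ False # tens j @ [False, True, True]))" by simp
  show ?thesis unfolding crit_critP w
  proof (rule critP_tens_prefix)
    show "fst (0::nat,1::nat) \<le> snd (0::nat,1::nat)" by simp
    show "False # tens 1 @ False # tens j @ [False, True, True] \<noteq> []" by simp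
    fix i assume "i < (1::nat)"
    hence i: "i = 0" by simp
    have "tot (False # tens 1 @ False # tens j @ [False, True, True]) (Tp 1 (0,1)) =
        F (length (tens 1 @ False # tens j @ [False, True, True])) * 1 + tot (tens 1 @ False # tens j @ [False, True, True]) (1,3)"
      using tot_F[of "tens 1 @ False # tens j @ [False, True, True]" "Tp 1 (0,1)"]
      by (simp add: stepb_def eval_nat_numeral del: tens_Suc)
    also have "length (tens 1 @ False # tens j @ [False, True, True]) = n - 3" by (simp add: n_def)
    also have "tot (tens 1 @ False # tens j @ [False, True, True]) (1,3) = e n 1 + u"
      using rest1 by (simp add: numeral_3_eq_3 del: tens_Suc)
    finally have tt: "tot (False # tens 1 @ False # tens j @ [False, True, True]) (Tp 1 (0,1)) = F (n - 3) + (e n 1 + u)" by simp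
    have idx: "2 * (1 - 0) + length (False # tens 1 @ False # tens j @ [False, True, True]) = Suc (n - 1)"
      by (simp add: n_def)
    have "dr False (Tp 0 (0,1)) (Suc (n - 1)) = F (n - 1)" by (simp add: dr_False_ge2 n_def)
    hence d: "dr False (Tp 0 (0,1)) (2 * (1 - 0) + length (False # tens 1 @ False # tens j @ [False, True, True])) = F (n - 1)"
      by (simp only: idx)
    have "F (n - 2) = F (n - 3) + F (n - 4)" by (intro F_n2) (simp add: n_def)
    moreover have "F (n - 1) = F (n - 2) + F (n - 3)"
    proof -
      obtain k where "n = k + 4" by (simp add: n_def)
      thus ?thesis by (simp add: eval_nat_numeral)
    qed
    moreover have "F (n - 4) \<le> F (n - 3)" by (rule F_mono) simp
    ultimately have "2 * F (n - 4) \<le> F (n - 1) - F (n - 3)" by simp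
    thus "tot (False # tens 1 @ False # tens j @ [False, True, True]) (Tp 1 (0,1))
        < dr False (Tp i (0,1)) (2 * (1 - i) + length (False # tens 1 @ False # tens j @ [False, True, True]))"
      using tt d b i by (simp add: e_0)
  next
    show "critP (False # tens 1 @ False # tens j @ [False, True, True]) (Tp 1 (0,1))"
    proof (rule critP_False)
      have s: "stepb False (Tp 1 (0,1)) = (1,3)" by (simp add: stepb_def eval_nat_numeral)
      show "critP (tens 1 @ False # tens j @ [False, True, True]) (stepb False (Tp 1 (0,1)))" unfolding s
      proof (rule critP_tens_prefix)
        show "fst (1::nat,3::nat) \<le> snd (1::nat,3::nat)" by simp
        show "False # tens j @ [False, True, True] \<noteq> []" by simp
        fix i assume "i < (1::nat)"
        hence i: "i = 0" by simp
        have T13: "Tp 1 (1,3) = (4,7)" by (simp add: eval_nat_numeral)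
        have "tot (False # tens j @ [False, True, True]) (4,7) = F (2*j+3) * 3 + tot (tens j @ [False, True, True]) (4,11)"
          using tot_F[of "tens j @ [False, True, True]" "(4,7)"] by (simp add: stepb_def eval_nat_numeral del: tot.simps)
        moreover have "e n 1 = F (2*j+3) * 3" by (simp add: e_def n_def eval_nat_numeral)
        ultimately have "tot (False # tens j @ [False, True, True]) (Tp 1 (1,3)) = e n 1 + u"
          using tu T13 by simp
        moreover have "dr False (Tp 0 (1,3)) (2 * (1 - 0) + length (False # tens j @ [False, True, True])) = e n 0"
          by (simp add: dr_False_ge2 e_def n_def eval_nat_numeral)
        ultimately show "tot (False # tens j @ [False, True, True]) (Tp 1 (1,3))
            < dr False (Tp i (1,3)) (2 * (1 - i) + length (False # tens j @ [False, True, True]))"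
          using b i by simp
      next
        show "critP (False # tens j @ [False, True, True]) (Tp 1 (1,3))"
        proof (rule critP_False)
          have s: "stepb False (Tp 1 (1,3)) = (4,11)" by (simp add: stepb_def eval_nat_numeral)
          show "critP (tens j @ [False, True, True]) (stepb False (Tp 1 (1,3)))" unfolding s
          proof (rule critP_tens_prefix)
            show "fst (4::nat,11::nat) \<le> snd (4::nat,11::nat)" by simp
            show "[False, True, True] \<noteq> []" by simp
            fix i assume ij: "i < j"
            have "tot [False, True, True] (Tp j (4,11)) = u" using tu tot_tens[of "(4,11)" "[False,True,True]" j] by (simp del: tot.simps)
            moreover have idx: "2 * (j - i) + length [False, True, True] = 2 * (j - i) + 3" by simp
            ultimately show "tot [False, True, True] (Tp j (4,11)) < dr False (Tp i (4,11)) (2 * (j - i) + length [False, True, True])"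
              using G_c[OF ij] unfolding idx u_def by (simp only:)
          next
            show "critP [False, True, True] (Tp j (4,11))"
            proof (rule critP_False)
              have "fst (Tp j (4,11)) < snd (Tp j (4,11))" by (rule Tp_lt) simp
              hence "fst (stepb False (Tp j (4,11))) < snd (stepb False (Tp j (4,11)))" by (simp add: stepb_def)
              thus "critP [True, True] (stepb False (Tp j (4,11)))" by (intro critP_E) (simp_all add: ends_def)
            qed
          qed
        qed
      qed
    qed
  qed
qed


definition fam :: "bool list set" where
  "fam = {tens k @ [True] | k. True} \<union> {tens k @ [True, True] | k. True}
    \<union> {tens a @ False # tens b @ [True] | a b. 1 \<le> a \<and> a \<le> b + 1}
    \<union> {tens a @ False # tens b @ [True, True] | a b. 1 \<le> a}
    \<union> {[True, False, False] @ tens b @ False # tens c @ [True] | b c. b \<le> c + 1 \<and> \<not> (b = 0 \<and> c = 0)}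
    \<union> {[True, False, False] @ tens b @ False # tens c @ [True, True] | b c. True}
    \<union> {[True, False, False, True, False, False] @ tens j @ [False, True, True] | j. 2 \<le> j}"

lemma fam_cases:
  assumes "w \<in> fam"
  obtains (A) k where "w = tens k @ [True]"
    | (B) k where "w = tens k @ [True, True]"
    | (C) a b where "w = tens a @ False # tens b @ [True]" "1 \<le> a" "a \<le> b + 1"
    | (D) a b where "w = tens a @ False # tens b @ [True, True]" "1 \<le> a"
    | (E) b c where "w = [True, False, False] @ tens b @ False # tens c @ [True]" "b \<le> c + 1" "\<not> (b = 0 \<and> c = 0)"
    | (F) b c where "w = [True, False, False] @ tens b @ False # tens c @ [True, True]"
    | (G) j where "w = [True, False, False, True, False, False] @ tens j @ [False, True, True]" "2 \<le> j"
  using assms unfolding fam_def by blast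

lemma fam_crit: "w \<in> fam \<Longrightarrow> crit w"
proof -
  assume "w \<in> fam"
  thus ?thesis
  proof (cases rule: fam_cases)
    case (A k) thus ?thesis using incl_AB[of "[True]" k] by (simp add: ends_def)
  next
    case (B k) thus ?thesis using incl_AB[of "[True, True]" k] by (simp add: ends_def)
  next
    case (C a b) thus ?thesis using incl_C by simp
  next
    case (D a b) thus ?thesis using incl_D by simp
  next
    case (E b c) thus ?thesis using incl_E by simp
  next
    case (F b c) thus ?thesis using incl_F by simp
  next
    case (G j) thus ?thesis using incl_G by simp
  qed
qed

lemma tens_hd: "\<exists>s. tens k @ True # r = True # s"
  by (cases k) auto

lemma tens_hd1: "1 \<le> k \<Longrightarrow> \<exists>s. tens k @ r = True # s"
  by (cases k) auto

lemma fam_hd: "w \<in> fam \<Longrightarrow> \<exists>s. w = True # s"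
proof -
  assume "w \<in> fam"
  thus ?thesis
  proof (cases rule: fam_cases)
    case (A k) thus ?thesis using tens_hd[of k "[]"] by simp
  next
    case (B k) thus ?thesis using tens_hd[of k "[True]"] by simp
  next
    case (C a b) thus ?thesis using tens_hd1[of a "False # tens b @ [True]"] by simp
  next
    case (D a b) thus ?thesis using tens_hd1[of a "False # tens b @ [True, True]"] by simp
  qed auto
qed

definition nTF :: "bool list \<Rightarrow> bool" where
  "nTF x \<longleftrightarrow> \<not> (\<exists>x'. x = True # False # x')"

lemma tens_decomp: "\<exists>k x. w = tens k @ x \<and> nTF x"
proof (induction "length w" arbitrary: w rule: less_induct)
  case less
  show ?case
  proof (cases "\<exists>x'. w = True # False # x'")
    case True
    then obtain x' where w: "w = True # False # x'" by blast
    have "length x' < length w" using w by simp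
    then obtain k x where "x' = tens k @ x" "nTF x" using less by blast
    thus ?thesis using w by (intro exI[of _ "Suc k"] exI[of _ x]) auto
  next
    case False
    thus ?thesis by (intro exI[of _ 0] exI[of _ w]) (auto simp: nTF_def)
  qed
qed

lemma last_Ftens: "last (False # tens b) = False"
  by (induction b) auto

lemma last_tens_Suc: "last (tens (Suc k)) = False"
  by (induction k) auto

lemma last_tens: "1 \<le> k \<Longrightarrow> last (tens k) = False"
  using last_tens_Suc[of "k - 1"] by simp

lemma crit_no11': "crit (q @ True # True # r) \<Longrightarrow> r = []" by (rule crit_no11)

lemma level3:
  assumes c: "crit ([True, False, False] @ tens b @ False # y2)" and y: "y2 \<noteq> []" and l: "last y2 = True"
  shows "[True, False, False] @ tens b @ False # y2 \<in> fam"
proof -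
  obtain k x3 where y2: "y2 = tens k @ x3" and n: "nTF x3" using tens_decomp by blast
  show ?thesis
  proof (cases x3)
    case Nil
    hence "k \<ge> 1" using y y2 by (cases k) auto
    thus ?thesis using l y2 Nil last_tens by simp
  next
    case (Cons h x4)
    show ?thesis
    proof (cases h)
      case True
      show ?thesis
      proof (cases x4)
        case Nil
        have "b \<le> k + 1 \<and> \<not> (b = 0 \<and> k = 0)" using excl_E[of b k] c y2 Cons True Nil by simp
        thus ?thesis using y2 Cons True Nil unfolding fam_def by blast
      next
        case (Cons h2 r)
        show ?thesis
        proof (cases h2)
          case False thus ?thesis using n \<open>x3 = h # x4\<close> \<open>h\<close> Cons by (simp add: nTF_def)
        next
          case True
          have "crit (([True, False, False] @ tens b @ False # tens k) @ True # True # r)"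
            using c y2 \<open>x3 = h # x4\<close> \<open>h\<close> Cons True by simp
          hence "r = []" by (rule crit_no11)
          thus ?thesis using y2 \<open>x3 = h # x4\<close> \<open>h\<close> Cons True unfolding fam_def by blast
        qed
      qed
    next
      case False
      hence x3: "x3 = False # x4" using Cons by simp
      have x4: "x4 \<noteq> []" using l y2 x3 by auto
      have lx4: "last x4 = True" using l y2 x3 x4 by simp
      show ?thesis
      proof (cases "b = 0")
        case True
        have "crit ([True, False, False, False] @ tens k @ False # x4)" using c y2 x3 True by simp
        thus ?thesis using excl_b0 x4 by blast
      next
        case False
        show ?thesis
        proof (cases "b = 1")
          case True
          have "crit ([True, False, False, True, False, False] @ tens k @ False # x4)" using c y2 x3 True by simp
          from excl_b1[OF this x4 lx4] have "x4 = [True, True] \<and> 2 \<le> k" .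
          thus ?thesis using y2 x3 True unfolding fam_def by auto
        next
          case False
          hence "2 \<le> b" using \<open>b \<noteq> 0\<close> by simp
          thus ?thesis using excl_b2[of b k x4] c y2 x3 x4 by simp
        qed
      qed
    qed
  qed
qed

lemma level2:
  assumes c: "crit (tens a @ False # y)" and a: "1 \<le> a" and l: "last (tens a @ False # y) = True"
  shows "tens a @ False # y \<in> fam"
proof -
  obtain b x2 where y: "y = tens b @ x2" and n: "nTF x2" using tens_decomp by blast
  show ?thesis
  proof (cases x2)
    case Nil
    thus ?thesis using l y last_Ftens by simp
  next
    case (Cons h x3)
    show ?thesis
    proof (cases h)
      case True
      show ?thesis
      proof (cases x3)
        case Nil
        have "a \<le> b + 1" using excl_C[of a b] c y Cons True Nil a by simp
        thus ?thesis using y Cons True Nil a unfolding fam_def by blast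
      next
        case (Cons h2 r)
        show ?thesis
        proof (cases h2)
          case False thus ?thesis using n \<open>x2 = h # x3\<close> \<open>h\<close> Cons by (simp add: nTF_def)
        next
          case True
          have "crit ((tens a @ False # tens b) @ True # True # r)"
            using c y \<open>x2 = h # x3\<close> \<open>h\<close> Cons True by simp
          hence "r = []" by (rule crit_no11)
          thus ?thesis using y \<open>x2 = h # x3\<close> \<open>h\<close> Cons True a unfolding fam_def by blast
        qed
      qed
    next
      case False
      hence x2: "x2 = False # x3" using Cons by simp
      have x3: "x3 \<noteq> []" using l y x2 by auto
      have lx3: "last x3 = True" using l y x2 x3 by simp
      show ?thesis
      proof (cases "a = 1")
        case True
        have "crit ([True, False, False] @ tens b @ False # x3)" using c y x2 True by simp
        from level3[OF this x3 lx3] show ?thesis using y x2 True by simp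
      next
        case False
        hence "2 \<le> a" using a by simp
        thus ?thesis using excl_a2[of a b x3] c y x2 x3 by simp
      qed
    qed
  qed
qed

lemma crit_fam:
  assumes c: "crit w" and h: "w = True # s" and l: "last w = True"
  shows "w \<in> fam"
proof -
  obtain a x where w: "w = tens a @ x" and n: "nTF x" using tens_decomp by blast
  show ?thesis
  proof (cases a)
    case 0
    hence x: "x = True # s" using w h by simp
    show ?thesis
    proof (cases s)
      case Nil thus ?thesis using h unfolding fam_def by (auto intro: exI[of _ 0])
    next
      case (Cons h2 r)
      show ?thesis
      proof (cases h2)
        case False thus ?thesis using n x Cons by (simp add: nTF_def)
      next
        case True
        have "crit ([] @ True # True # r)" using c h Cons True by simp
        hence "r = []" by (rule crit_no11)
        thus ?thesis using h Cons True unfolding fam_def by (auto intro: exI[of _ 0])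
      qed
    qed
  next
    case (Suc a')
    show ?thesis
    proof (cases x)
      case Nil
      thus ?thesis using l w Suc last_tens[of a] by simp
    next
      case (Cons h1 x1)
      show ?thesis
      proof (cases h1)
        case True
        show ?thesis
        proof (cases x1)
          case Nil thus ?thesis using w Cons True unfolding fam_def by blast
        next
          case (Cons h2 r)
          show ?thesis
          proof (cases h2)
            case False thus ?thesis using n \<open>x = h1 # x1\<close> \<open>h1\<close> Cons by (simp add: nTF_def)
          next
            case True
            have "crit (tens a @ True # True # r)" using c w \<open>x = h1 # x1\<close> \<open>h1\<close> Cons True by simp
            hence "r = []" by (rule crit_no11)
            thus ?thesis using w \<open>x = h1 # x1\<close> \<open>h1\<close> Cons True unfolding fam_def by blast
          qed
        qed
      next
        case False
        hence x: "x = False # x1" using Cons by simp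
        show ?thesis using level2[of a x1] c w x l Suc by simp
      qed
    qed
  qed
qed

lemma num_True_pos: "num (True # s) \<ge> 1"
proof -
  have "(1::nat) \<le> 2 ^ length s" by simp
  hence "(1::nat) \<le> 2 ^ length s + num s" by linarith
  thus ?thesis by (simp add: num_Cons)
qed

theorem record_fam: "{bin_rep v | v. record_setter v} = fam"
proof
  show "{bin_rep v | v. record_setter v} \<subseteq> fam"
  proof
    fix w assume "w \<in> {bin_rep v | v. record_setter v}"
    then obtain v where w: "w = bin_rep v" and r: "record_setter v" by blast
    have v1: "v \<ge> 1" using r by (simp add: record_setter_def)
    obtain s where s: "bin_rep v = True # s" using bin_rep_True[OF v1] by blast
    have "odd v" using record_odd[OF r] .
    hence "bin_rep v = bin_rep (v div 2) @ [True]" using v1 by (subst bin_rep.simps) auto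
    hence l: "last w = True" using w by simp
    have "crit w" using record_crit[OF v1] r w by simp
    thus "w \<in> fam" using crit_fam[of w s] s w l by simp
  qed
next
  show "fam \<subseteq> {bin_rep v | v. record_setter v}"
  proof
    fix w assume wf: "w \<in> fam"
    obtain s where s: "w = True # s" using fam_hd[OF wf] by blast
    define v where "v = num w"
    have b: "bin_rep v = w" using bin_rep_num[of s] s by (simp add: v_def)
    have v1: "v \<ge> 1" using num_True_pos[of s] s by (simp add: v_def)
    have "record_setter v" using record_crit[OF v1] b fam_crit[OF wf] by simp
    thus "w \<in> {bin_rep v | v. record_setter v}" using b by blast
  qed
qed


definition GP :: "(nat, bool) prod set" where
  "GP = {(1, []), (1, [Inr True, Inr False, Inl 1]),
     (2, [Inr True, Inr False, Inr False]), (2, [Inr True, Inr False, Inl 2, Inr True, Inr False]),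
     (0, [Inl 1, Inr True]),
     (0, [Inl 1, Inr True, Inr True]),
     (0, [Inl 2, Inl 1, Inr True]),
     (0, [Inr True, Inr False, Inl 1, Inr False, Inl 1, Inr True, Inr True]),
     (0, [Inr True, Inr False, Inr False, Inl 2, Inl 1, Inr True]),
     (0, [Inr True, Inr False, Inr False, Inr False, Inr True, Inr False, Inl 1, Inr True]),
     (0, [Inr True, Inr False, Inr False, Inl 1, Inr False, Inl 1, Inr True, Inr True]),
     (0, [Inr True, Inr False, Inr False, Inr True, Inr False, Inr False, Inr True, Inr False, Inr True, Inr False,
          Inl 1, Inr False, Inr True, Inr True])}"

lemma finite_GP: "finite GP" by (simp add: GP_def)

definition Lang :: "nat \<Rightarrow> bool list set" where
  "Lang A = (if A = 0 then fam else if A = 1 then range tens else if A = 2 then {tens (Suc a) @ False # tens a | a. True} else {})"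

fun symL :: "nat + bool \<Rightarrow> bool list set" where
  "symL (Inl A) = Lang A"
| "symL (Inr t) = {[t]}"

fun LL :: "(nat + bool) list \<Rightarrow> bool list set" where
  "LL [] = {[]}"
| "LL (s # \<alpha>) = {u @ v | u v. u \<in> symL s \<and> v \<in> LL \<alpha>}"

lemma LL_append: "LL (\<alpha> @ \<beta>) = {u @ v | u v. u \<in> LL \<alpha> \<and> v \<in> LL \<beta>}"
proof (induction \<alpha>)
  case Nil thus ?case by simp
next
  case (Cons s \<alpha>)
  show ?case
  proof (intro set_eqI iffI)
    fix w assume "w \<in> LL ((s # \<alpha>) @ \<beta>)"
    then obtain u v where "w = u @ v" "u \<in> symL s" "v \<in> LL (\<alpha> @ \<beta>)" by auto
    then obtain v1 v2 where "v = v1 @ v2" "v1 \<in> LL \<alpha>" "v2 \<in> LL \<beta>" using Cons by auto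
    moreover have "u @ v1 \<in> LL (s # \<alpha>)" using \<open>u \<in> symL s\<close> \<open>v1 \<in> LL \<alpha>\<close> by auto
    ultimately show "w \<in> {u @ v |u v. u \<in> LL (s # \<alpha>) \<and> v \<in> LL \<beta>}"
      using \<open>w = u @ v\<close> by (metis (mono_tags, lifting) CollectI append.assoc)
  next
    fix w assume "w \<in> {u @ v |u v. u \<in> LL (s # \<alpha>) \<and> v \<in> LL \<beta>}"
    then obtain u v where "w = u @ v" "u \<in> LL (s # \<alpha>)" "v \<in> LL \<beta>" by auto
    then obtain u1 u2 where "u = u1 @ u2" "u1 \<in> symL s" "u2 \<in> LL \<alpha>" by auto
    hence "u2 @ v \<in> LL (\<alpha> @ \<beta>)" using Cons \<open>v \<in> LL \<beta>\<close> by auto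
    thus "w \<in> LL ((s # \<alpha>) @ \<beta>)" using \<open>w = u @ v\<close> \<open>u = u1 @ u2\<close> \<open>u1 \<in> symL s\<close> by auto
  qed
qed

lemma LL_map_Inr: "LL (map Inr w) = {w}"
  by (induction w) auto

lemma LL_single: "LL [Inl A] = Lang A"
  by simp

lemma tens_snoc: "tens a @ [True, False] = tens (Suc a)"
  by (induction a) auto

lemma famA: "tens k @ [True] \<in> fam" unfolding fam_def by blast
lemma famB: "tens k @ [True, True] \<in> fam" unfolding fam_def by blast
lemma famC: "1 \<le> a \<Longrightarrow> a \<le> b + 1 \<Longrightarrow> tens a @ False # tens b @ [True] \<in> fam" unfolding fam_def by blast
lemma famD: "1 \<le> a \<Longrightarrow> tens a @ False # tens b @ [True, True] \<in> fam" unfolding fam_def by blast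
lemma famE: "b \<le> c + 1 \<Longrightarrow> \<not> (b = 0 \<and> c = 0) \<Longrightarrow> [True, False, False] @ tens b @ False # tens c @ [True] \<in> fam"
  unfolding fam_def by blast
lemma famF: "[True, False, False] @ tens b @ False # tens c @ [True, True] \<in> fam" unfolding fam_def by blast
lemma famG: "2 \<le> j \<Longrightarrow> [True, False, False, True, False, False] @ tens j @ [False, True, True] \<in> fam"
  unfolding fam_def by blast

lemma Lang_2: "Lang 2 = {tens (Suc a) @ False # tens a | a. True}" by (simp add: Lang_def)

lemma p_X0: "LL [] \<subseteq> Lang 1"
  by (auto simp: Lang_def intro: range_eqI[of _ _ 0])

lemma p_X1: "LL [Inr True, Inr False, Inl 1] \<subseteq> Lang 1"
proof
  fix w assume "w \<in> LL [Inr True, Inr False, Inl 1]"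
  then obtain k where "w = True # False # tens k" by (auto simp: Lang_def)
  thus "w \<in> Lang 1" by (auto simp: Lang_def intro: range_eqI[of _ _ "Suc k"])
qed

lemma p_W0: "LL [Inr True, Inr False, Inr False] \<subseteq> Lang 2"
proof
  fix w assume "w \<in> LL [Inr True, Inr False, Inr False]"
  hence "w = tens (Suc 0) @ False # tens 0" by simp
  moreover have "tens (Suc 0) @ False # tens 0 \<in> Lang 2" unfolding Lang_2 by blast
  ultimately show "w \<in> Lang 2" by simp
qed

lemma p_W1: "LL [Inr True, Inr False, Inl 2, Inr True, Inr False] \<subseteq> Lang 2"
proof
  fix w assume "w \<in> LL [Inr True, Inr False, Inl 2, Inr True, Inr False]"
  then obtain a where "w = True # False # (tens (Suc a) @ False # tens a) @ [True, False]" by (auto simp: Lang_def)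
  hence "w = tens (Suc (Suc a)) @ False # tens (Suc a)" by (simp add: tens_snoc)
  moreover have "tens (Suc (Suc a)) @ False # tens (Suc a) \<in> Lang 2" unfolding Lang_2 by blast
  ultimately show "w \<in> Lang 2" by (simp del: tens_Suc)
qed

lemma p_SA: "LL [Inl 1, Inr True] \<subseteq> Lang 0"
  by (auto simp: Lang_def famA)

lemma p_SB: "LL [Inl 1, Inr True, Inr True] \<subseteq> Lang 0"
  by (auto simp: Lang_def famB)

lemma p_SC: "LL [Inl 2, Inl 1, Inr True] \<subseteq> Lang 0"
proof
  fix w assume "w \<in> LL [Inl 2, Inl 1, Inr True]"
  then obtain a e where "w = (tens (Suc a) @ False # tens a) @ tens e @ [True]" by (auto simp: Lang_def)
  hence "w = tens (Suc a) @ False # tens (a + e) @ [True]" by (simp add: tens_add)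
  thus "w \<in> Lang 0" using famC[of "Suc a" "a + e"] by (simp add: Lang_def)
qed

lemma p_SD: "LL [Inr True, Inr False, Inl 1, Inr False, Inl 1, Inr True, Inr True] \<subseteq> Lang 0"
proof
  fix w assume "w \<in> LL [Inr True, Inr False, Inl 1, Inr False, Inl 1, Inr True, Inr True]"
  then obtain k b where "w = True # False # tens k @ False # tens b @ [True, True]" by (auto simp: Lang_def)
  hence "w = tens (Suc k) @ False # tens b @ [True, True]" by simp
  thus "w \<in> Lang 0" using famD[of "Suc k" b] by (simp add: Lang_def)
qed

lemma p_SE1: "LL [Inr True, Inr False, Inr False, Inl 2, Inl 1, Inr True] \<subseteq> Lang 0"
proof
  fix w assume "w \<in> LL [Inr True, Inr False, Inr False, Inl 2, Inl 1, Inr True]"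
  then obtain a e where "w = [True, False, False] @ (tens (Suc a) @ False # tens a) @ tens e @ [True]" by (auto simp: Lang_def)
  hence "w = [True, False, False] @ tens (Suc a) @ False # tens (a + e) @ [True]" by (simp add: tens_add)
  thus "w \<in> Lang 0" using famE[of "Suc a" "a + e"] by (simp add: Lang_def)
qed

lemma p_SE0: "LL [Inr True, Inr False, Inr False, Inr False, Inr True, Inr False, Inl 1, Inr True] \<subseteq> Lang 0"
proof
  fix w assume "w \<in> LL [Inr True, Inr False, Inr False, Inr False, Inr True, Inr False, Inl 1, Inr True]"
  then obtain k where "w = [True, False, False, False, True, False] @ tens k @ [True]" by (auto simp: Lang_def)
  hence "w = [True, False, False] @ tens 0 @ False # tens (Suc k) @ [True]" by simp
  thus "w \<in> Lang 0" using famE[of 0 "Suc k"] by (simp add: Lang_def)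
qed

lemma p_SF: "LL [Inr True, Inr False, Inr False, Inl 1, Inr False, Inl 1, Inr True, Inr True] \<subseteq> Lang 0"
proof
  fix w assume "w \<in> LL [Inr True, Inr False, Inr False, Inl 1, Inr False, Inl 1, Inr True, Inr True]"
  then obtain b c where "w = [True, False, False] @ tens b @ False # tens c @ [True, True]" by (auto simp: Lang_def)
  thus "w \<in> Lang 0" using famF[of b c] by (simp add: Lang_def)
qed

lemma p_SG: "LL [Inr True, Inr False, Inr False, Inr True, Inr False, Inr False, Inr True, Inr False, Inr True, Inr False,
          Inl 1, Inr False, Inr True, Inr True] \<subseteq> Lang 0"
proof
  fix w assume "w \<in> LL [Inr True, Inr False, Inr False, Inr True, Inr False, Inr False, Inr True, Inr False, Inr True, Inr False,
          Inl 1, Inr False, Inr True, Inr True]"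
  then obtain k where "w = [True, False, False, True, False, False, True, False, True, False] @ tens k @ [False, True, True]"
    by (auto simp: Lang_def)
  hence "w = [True, False, False, True, False, False] @ tens (Suc (Suc k)) @ [False, True, True]" by simp
  thus "w \<in> Lang 0" using famG[of "Suc (Suc k)"] by (simp add: Lang_def)
qed

lemma prod_sound: "(A, \<gamma>) \<in> GP \<Longrightarrow> LL \<gamma> \<subseteq> Lang A"
  unfolding GP_def
  apply (elim insertE emptyE)
  apply (simp_all only: prod.inject)
  apply (rule p_X0 p_X1 p_W0 p_W1 p_SA p_SB p_SC p_SD p_SE1 p_SE0 p_SF p_SG)+
  done

lemma LL_Inl: "LL [Inl A] = Lang A" by simp

lemma step_sound: "cfg_step GP \<alpha> \<beta> \<Longrightarrow> LL \<beta> \<subseteq> LL \<alpha>"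
proof -
  assume "cfg_step GP \<alpha> \<beta>"
  then obtain l A r \<gamma> where a: "\<alpha> = l @ [Inl A] @ r" and p: "(A, \<gamma>) \<in> GP" and b: "\<beta> = l @ \<gamma> @ r"
    unfolding cfg_step_def by blast
  have "LL \<gamma> \<subseteq> LL [Inl A]" using prod_sound[OF p] by simp
  thus ?thesis unfolding a b LL_append by blast
qed

lemma derive_sound: "(cfg_step GP)\<^sup>*\<^sup>* \<alpha> \<beta> \<Longrightarrow> LL \<beta> \<subseteq> LL \<alpha>"
proof (induction rule: rtranclp_induct)
  case base thus ?case by simp
next
  case (step y z) thus ?case using step_sound by blast
qed

lemma lang_sound: "cfg_lang GP 0 \<subseteq> fam"
proof
  fix w assume "w \<in> cfg_lang GP 0"
  hence "(cfg_step GP)\<^sup>*\<^sup>* [Inl 0] (map Inr w)" by (simp add: cfg_lang_def)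
  hence "LL (map Inr w) \<subseteq> LL [Inl 0]" by (rule derive_sound)
  thus "w \<in> fam" by (simp add: LL_map_Inr Lang_def)
qed

lemma step_ctx: "cfg_step P \<alpha> \<beta> \<Longrightarrow> cfg_step P (l @ \<alpha> @ r) (l @ \<beta> @ r)"
proof -
  assume "cfg_step P \<alpha> \<beta>"
  then obtain l0 A r0 \<gamma> where "\<alpha> = l0 @ [Inl A] @ r0" "(A, \<gamma>) \<in> P" "\<beta> = l0 @ \<gamma> @ r0"
    unfolding cfg_step_def by blast
  thus ?thesis unfolding cfg_step_def by (intro exI[of _ "l @ l0"] exI[of _ A] exI[of _ "r0 @ r"] exI[of _ \<gamma>]) auto
qed

lemma derive_ctx: "(cfg_step P)\<^sup>*\<^sup>* \<alpha> \<beta> \<Longrightarrow> (cfg_step P)\<^sup>*\<^sup>* (l @ \<alpha> @ r) (l @ \<beta> @ r)"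
proof (induction rule: rtranclp_induct)
  case base thus ?case by simp
next
  case (step y z) thus ?case using step_ctx[of P y z l r] by (meson rtranclp.rtrancl_into_rtrancl)
qed

lemma derive_app: "(cfg_step P)\<^sup>*\<^sup>* \<alpha> \<alpha>' \<Longrightarrow> (cfg_step P)\<^sup>*\<^sup>* \<beta> \<beta>' \<Longrightarrow> (cfg_step P)\<^sup>*\<^sup>* (\<alpha> @ \<beta>) (\<alpha>' @ \<beta>')"
proof -
  assume a: "(cfg_step P)\<^sup>*\<^sup>* \<alpha> \<alpha>'" and b: "(cfg_step P)\<^sup>*\<^sup>* \<beta> \<beta>'"
  have "(cfg_step P)\<^sup>*\<^sup>* ([] @ \<alpha> @ \<beta>) ([] @ \<alpha>' @ \<beta>)" by (rule derive_ctx[OF a])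
  moreover have "(cfg_step P)\<^sup>*\<^sup>* (\<alpha>' @ \<beta> @ []) (\<alpha>' @ \<beta>' @ [])" by (rule derive_ctx[OF b])
  ultimately show ?thesis by simp
qed

lemma derive_prod: "(A, \<gamma>) \<in> P \<Longrightarrow> (cfg_step P)\<^sup>*\<^sup>* [Inl A] \<gamma>"
proof -
  assume "(A, \<gamma>) \<in> P"
  hence "cfg_step P ([] @ [Inl A] @ []) ([] @ \<gamma> @ [])" unfolding cfg_step_def by blast
  thus ?thesis by simp
qed

lemma derive_X: "(cfg_step GP)\<^sup>*\<^sup>* [Inl 1] (map Inr (tens k))"
proof (induction k)
  case 0
  have "(1, []) \<in> GP" unfolding GP_def by (intro insertI1 insertI2)
  thus ?case using derive_prod[of 1 "[]" GP] by simp
next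
  case (Suc k)
  have "(1, [Inr True, Inr False, Inl 1]) \<in> GP" unfolding GP_def by (intro insertI1 insertI2)
  hence s1: "(cfg_step GP)\<^sup>*\<^sup>* [Inl 1] ([Inr True, Inr False] @ [Inl 1])" using derive_prod[of 1 _ GP] by simp
  have "(cfg_step GP)\<^sup>*\<^sup>* ([Inr True, Inr False] @ [Inl 1]) ([Inr True, Inr False] @ map Inr (tens k))"
    using derive_app[OF rtranclp.rtrancl_refl Suc] .
  with s1 show ?case by simp
qed

lemma derive_W: "(cfg_step GP)\<^sup>*\<^sup>* [Inl 2] (map Inr (tens (Suc a) @ False # tens a))"
proof (induction a)
  case 0
  have "(2, [Inr True, Inr False, Inr False]) \<in> GP" unfolding GP_def by (intro insertI1 insertI2)
  thus ?case using derive_prod[of 2 _ GP] by simp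
next
  case (Suc a)
  have "(2, [Inr True, Inr False, Inl 2, Inr True, Inr False]) \<in> GP" unfolding GP_def by (intro insertI1 insertI2)
  hence s1: "(cfg_step GP)\<^sup>*\<^sup>* [Inl 2] ([Inr True, Inr False] @ [Inl 2] @ [Inr True, Inr False])"
    using derive_prod[of 2 _ GP] by simp
  have "(cfg_step GP)\<^sup>*\<^sup>* ([Inr True, Inr False] @ [Inl 2] @ [Inr True, Inr False])
      ([Inr True, Inr False] @ map Inr (tens (Suc a) @ False # tens a) @ [Inr True, Inr False])"
    by (rule derive_ctx[OF Suc])
  moreover have "[Inr True, Inr False] @ map Inr (tens (Suc a) @ False # tens a) @ [Inr True, Inr False]
      = map Inr (tens (Suc (Suc a)) @ False # tens (Suc a))"
    using arg_cong[OF tens_snoc[of a], of "map Inr"] by simp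
  ultimately show ?case using s1 rtranclp_trans[of "cfg_step GP"] by metis
qed

lemma derive_S: "(0, \<gamma>) \<in> GP \<Longrightarrow> (cfg_step GP)\<^sup>*\<^sup>* \<gamma> (map Inr w) \<Longrightarrow> w \<in> cfg_lang GP 0"
proof -
  assume g: "(0, \<gamma>) \<in> GP" and d: "(cfg_step GP)\<^sup>*\<^sup>* \<gamma> (map Inr w)"
  have "(cfg_step GP)\<^sup>*\<^sup>* [Inl 0] \<gamma>" by (rule derive_prod[OF g])
  hence "(cfg_step GP)\<^sup>*\<^sup>* [Inl 0] (map Inr w)" using d by (rule rtranclp_trans)
  thus ?thesis by (simp add: cfg_lang_def)
qed

lemma refl_T: "(cfg_step GP)\<^sup>*\<^sup>* (map Inr u) (map Inr u)" by simp

lemma lang_complete: "fam \<subseteq> cfg_lang GP 0"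
proof
  fix w assume "w \<in> fam"
  thus "w \<in> cfg_lang GP 0"
  proof (cases rule: fam_cases)
    case (A k)
    have g: "(0, [Inl 1, Inr True]) \<in> GP" unfolding GP_def by (intro insertI1 insertI2)
    have "(cfg_step GP)\<^sup>*\<^sup>* ([Inl 1] @ map Inr [True]) (map Inr (tens k) @ map Inr [True])"
      by (rule derive_app[OF derive_X refl_T])
    thus ?thesis using derive_S[OF g, of w] A by simp
  next
    case (B k)
    have g: "(0, [Inl 1, Inr True, Inr True]) \<in> GP" unfolding GP_def by (intro insertI1 insertI2)
    have "(cfg_step GP)\<^sup>*\<^sup>* ([Inl 1] @ map Inr [True, True]) (map Inr (tens k) @ map Inr [True, True])"
      by (rule derive_app[OF derive_X refl_T])
    thus ?thesis using derive_S[OF g, of w] B by simp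
  next
    case (C a b)
    obtain a' where a': "a = Suc a'" using C by (cases a) auto
    define e where "e = b - a'"
    have e: "b = a' + e" using C a' by (simp add: e_def)
    have g: "(0, [Inl 2, Inl 1, Inr True]) \<in> GP" unfolding GP_def by (intro insertI1 insertI2)
    have d: "(cfg_step GP)\<^sup>*\<^sup>* ([Inl 2] @ [Inl 1] @ map Inr [True])
        (map Inr (tens (Suc a') @ False # tens a') @ map Inr (tens e) @ map Inr [True])"
      by (rule derive_app[OF derive_W derive_app[OF derive_X refl_T]])
    have eq: "map Inr (tens (Suc a') @ False # tens a') @ map Inr (tens e) @ map Inr [True] = map Inr w"
      using C a' e by (simp add: tens_add del: tens_Suc)
    from d have "(cfg_step GP)\<^sup>*\<^sup>* ([Inl 2] @ [Inl 1] @ map Inr [True]) (map Inr w)" by (simp only: eq)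
    thus ?thesis using derive_S[OF g, of w] by simp
  next
    case (D a b)
    obtain k where k: "a = Suc k" using D by (cases a) auto
    have g: "(0, [Inr True, Inr False, Inl 1, Inr False, Inl 1, Inr True, Inr True]) \<in> GP" unfolding GP_def by (intro insertI1 insertI2)
    have "(cfg_step GP)\<^sup>*\<^sup>* (map Inr [True, False] @ [Inl 1] @ map Inr [False] @ [Inl 1] @ map Inr [True, True])
        (map Inr [True, False] @ map Inr (tens k) @ map Inr [False] @ map Inr (tens b) @ map Inr [True, True])"
      by (rule derive_app[OF refl_T derive_app[OF derive_X derive_app[OF refl_T derive_app[OF derive_X refl_T]]]])
    thus ?thesis using derive_S[OF g, of w] D k by simp
  next
    case (E b c)
    show ?thesis
    proof (cases b)
      case 0
      then obtain k where k: "c = Suc k" using E by (cases c) auto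
      have g: "(0, [Inr True, Inr False, Inr False, Inr False, Inr True, Inr False, Inl 1, Inr True]) \<in> GP"
        unfolding GP_def by (intro insertI1 insertI2)
      have "(cfg_step GP)\<^sup>*\<^sup>* (map Inr [True, False, False, False, True, False] @ [Inl 1] @ map Inr [True])
          (map Inr [True, False, False, False, True, False] @ map Inr (tens k) @ map Inr [True])"
        by (rule derive_app[OF refl_T derive_app[OF derive_X refl_T]])
      thus ?thesis using derive_S[OF g, of w] E 0 k by simp
    next
      case (Suc a')
      define e where "e = c - a'"
      have e: "c = a' + e" using E Suc by (simp add: e_def)
      have g: "(0, [Inr True, Inr False, Inr False, Inl 2, Inl 1, Inr True]) \<in> GP" unfolding GP_def by (intro insertI1 insertI2)
      have d: "(cfg_step GP)\<^sup>*\<^sup>* (map Inr [True, False, False] @ [Inl 2] @ [Inl 1] @ map Inr [True])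
          (map Inr [True, False, False] @ map Inr (tens (Suc a') @ False # tens a') @ map Inr (tens e) @ map Inr [True])"
        by (rule derive_app[OF refl_T derive_app[OF derive_W derive_app[OF derive_X refl_T]]])
      have eq: "map Inr [True, False, False] @ map Inr (tens (Suc a') @ False # tens a') @ map Inr (tens e) @ map Inr [True] = map Inr w"
        using E Suc e by (simp add: tens_add del: tens_Suc)
      from d have "(cfg_step GP)\<^sup>*\<^sup>* (map Inr [True, False, False] @ [Inl 2] @ [Inl 1] @ map Inr [True]) (map Inr w)"
        by (simp only: eq)
      thus ?thesis using derive_S[OF g, of w] by simp
    qed
  next
    case (F b c)
    have g: "(0, [Inr True, Inr False, Inr False, Inl 1, Inr False, Inl 1, Inr True, Inr True]) \<in> GP" unfolding GP_def by (intro insertI1 insertI2)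
    have "(cfg_step GP)\<^sup>*\<^sup>* (map Inr [True, False, False] @ [Inl 1] @ map Inr [False] @ [Inl 1] @ map Inr [True, True])
        (map Inr [True, False, False] @ map Inr (tens b) @ map Inr [False] @ map Inr (tens c) @ map Inr [True, True])"
      by (rule derive_app[OF refl_T derive_app[OF derive_X derive_app[OF refl_T derive_app[OF derive_X refl_T]]]])
    thus ?thesis using derive_S[OF g, of w] F by simp
  next
    case (G j)
    define k where "k = j - 2"
    have k: "j = Suc (Suc k)" using G by (simp add: k_def)
    have g: "(0, [Inr True, Inr False, Inr False, Inr True, Inr False, Inr False, Inr True, Inr False, Inr True, Inr False,
          Inl 1, Inr False, Inr True, Inr True]) \<in> GP" unfolding GP_def by (intro insertI1 insertI2)
    have "(cfg_step GP)\<^sup>*\<^sup>* (map Inr [True, False, False, True, False, False, True, False, True, False] @ [Inl 1] @ map Inr [False, True, True])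
        (map Inr [True, False, False, True, False, False, True, False, True, False] @ map Inr (tens k) @ map Inr [False, True, True])"
      by (rule derive_app[OF refl_T derive_app[OF derive_X refl_T]])
    thus ?thesis using derive_S[OF g, of w] G k by simp
  qed
qed

theorem mainTheorem20:
  shows "context_free {bin_rep v | v. record_setter v}"
  unfolding context_free_def record_fam
  using finite_GP lang_sound lang_complete by blast


end
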